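(* Let $\mathcal{H}$ be a complex Hilbert space, let $W_1,W_2\in\mathcal{B}(\mathcal{H})$ be co-isometries and let $Q\in\mathcal{B}(\mathcal{H})$ be a unitary such that $W_2W_1=W_1W_2Q$. Then there exist a Hilbert space $\mathcal{K}\supseteq\mathcal{H}$ and unitaries $\overline{Q},U_1,U_2\in\mathcal{B}(\mathcal{K})$, with $\mathcal{H}$ reducing $\overline{Q}$ and $\overline{Q}|_{\mathcal{H}}=Q$, such that (i) $U_2U_1=U_1U_2\overline{Q}$; and (ii) $U_i$ is a lifting of $W_i$ for $i=1,2$, so that $W_1^nW_2^m=P_{\mathcal{H}}U_1^nU_2^m|_{\mathcal{H}}$ and $W_2^nW_1^m=P_{\mathcal{H}}U_2^nU_1^m|_{\mathcal{H}}$ for all integers $n,m\geq 0$. In fact, given any $q\in\mathbb{T}$, one can choose $\overline{Q}=Q\oplus qI_{\mathcal{K}\ominus\mathcal{H}}$.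
   Context: For $\mathcal{H}\subseteq\mathcal{K}$, $S\in\mathcal{B}(\mathcal{K})$ is a lifting of $T\in\mathcal{B}(\mathcal{H})$ if $S(\mathcal{H}^\perp)\subseteq\mathcal{H}^\perp$ and $T=P_{\mathcal{H}}S|_{\mathcal{H}}$ (equivalently $S^*|_{\mathcal{H}}=T^*$). A co-isometry is $W$ with $WW^*=I$. $\mathbb{T}$ is the unit circle; $P_{\mathcal{H}}$ the orthogonal projection onto $\mathcal{H}$. *)

theory Defs
  imports "HOL-Analysis.Analysis"
begin

(* The Isabelle distribution has no library of complex Hilbert spaces, and HOL
   cannot quantify existentially over types.  We therefore represent a complex
   Hilbert space as a carrier set inside some type, together with its
   operations; the inner product is conjugate-linear in the first and linear in
   the second argument. *)

record 'v chspace =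
  hcarrier :: "'v set"
  hadd     :: "'v \<Rightarrow> 'v \<Rightarrow> 'v"
  hzero    :: "'v"
  hscale   :: "complex \<Rightarrow> 'v \<Rightarrow> 'v"
  hinner   :: "'v \<Rightarrow> 'v \<Rightarrow> complex"

definition hdiff :: "('v, 'm) chspace_scheme \<Rightarrow> 'v \<Rightarrow> 'v \<Rightarrow> 'v" where
  "hdiff V x y = hadd V x (hscale V (-1) y)"

definition hnorm :: "('v, 'm) chspace_scheme \<Rightarrow> 'v \<Rightarrow> real" where
  "hnorm V x = sqrt (Re (hinner V x x))"

definition complex_hilbert_space :: "('v, 'm) chspace_scheme \<Rightarrow> bool" where
  "complex_hilbert_space V \<longleftrightarrow>
     (let C = hcarrier V in
       hzero V \<in> C \<and>
       (\<forall>x\<in>C. \<forall>y\<in>C. hadd V x y \<in> C) \<and>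
       (\<forall>a. \<forall>x\<in>C. hscale V a x \<in> C) \<and>
       (\<forall>x\<in>C. \<forall>y\<in>C. \<forall>z\<in>C. hadd V (hadd V x y) z = hadd V x (hadd V y z)) \<and>
       (\<forall>x\<in>C. \<forall>y\<in>C. hadd V x y = hadd V y x) \<and>
       (\<forall>x\<in>C. hadd V (hzero V) x = x) \<and>
       (\<forall>x\<in>C. hscale V 0 x = hzero V) \<and>
       (\<forall>x\<in>C. hscale V 1 x = x) \<and>
       (\<forall>a b. \<forall>x\<in>C. hscale V a (hscale V b x) = hscale V (a * b) x) \<and>
       (\<forall>a b. \<forall>x\<in>C. hscale V (a + b) x = hadd V (hscale V a x) (hscale V b x)) \<and>
       (\<forall>a. \<forall>x\<in>C. \<forall>y\<in>C. hscale V a (hadd V x y) = hadd V (hscale V a x) (hscale V a y)) \<and>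
       (\<forall>x\<in>C. \<forall>y\<in>C. hinner V x y = cnj (hinner V y x)) \<and>
       (\<forall>x\<in>C. \<forall>y\<in>C. \<forall>z\<in>C. hinner V x (hadd V y z) = hinner V x y + hinner V x z) \<and>
       (\<forall>a. \<forall>x\<in>C. \<forall>y\<in>C. hinner V x (hscale V a y) = a * hinner V x y) \<and>
       (\<forall>x\<in>C. Im (hinner V x x) = 0 \<and> Re (hinner V x x) \<ge> 0) \<and>
       (\<forall>x\<in>C. hinner V x x = 0 \<longrightarrow> x = hzero V) \<and>
       (\<forall>f :: nat \<Rightarrow> 'v. (\<forall>n. f n \<in> C) \<and>
           (\<forall>e>0. \<exists>N. \<forall>m\<ge>N. \<forall>n\<ge>N. hnorm V (hdiff V (f m) (f n)) < e)
           \<longrightarrow> (\<exists>l\<in>C. (\<lambda>n. hnorm V (hdiff V (f n) l)) \<longlonglongrightarrow> 0)))"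

definition bounded_op :: "('v, 'm) chspace_scheme \<Rightarrow> ('v \<Rightarrow> 'v) \<Rightarrow> bool" where
  "bounded_op V T \<longleftrightarrow>
     (\<forall>x\<in>hcarrier V. T x \<in> hcarrier V) \<and>
     (\<forall>x\<in>hcarrier V. \<forall>y\<in>hcarrier V. T (hadd V x y) = hadd V (T x) (T y)) \<and>
     (\<forall>a. \<forall>x\<in>hcarrier V. T (hscale V a x) = hscale V a (T x)) \<and>
     (\<exists>c. \<forall>x\<in>hcarrier V. hnorm V (T x) \<le> c * hnorm V x)"

definition is_adjoint :: "('v, 'm) chspace_scheme \<Rightarrow> ('v \<Rightarrow> 'v) \<Rightarrow> ('v \<Rightarrow> 'v) \<Rightarrow> bool" where
  "is_adjoint V T S \<longleftrightarrow> bounded_op V S \<and>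
     (\<forall>x\<in>hcarrier V. \<forall>y\<in>hcarrier V. hinner V (T x) y = hinner V x (S y))"

text \<open>The Hilbert-space adjoint T* (meaningful on the carrier).\<close>
definition hadjoint :: "('v, 'm) chspace_scheme \<Rightarrow> ('v \<Rightarrow> 'v) \<Rightarrow> ('v \<Rightarrow> 'v)" where
  "hadjoint V T = (SOME S. is_adjoint V T S)"

definition coisometry :: "('v, 'm) chspace_scheme \<Rightarrow> ('v \<Rightarrow> 'v) \<Rightarrow> bool" where
  "coisometry V W \<longleftrightarrow> bounded_op V W \<and> (\<forall>x\<in>hcarrier V. W (hadjoint V W x) = x)"

definition unitary_op :: "('v, 'm) chspace_scheme \<Rightarrow> ('v \<Rightarrow> 'v) \<Rightarrow> bool" where
  "unitary_op V U \<longleftrightarrow> bounded_op V U \<and>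
     (\<forall>x\<in>hcarrier V. U (hadjoint V U x) = x \<and> hadjoint V U (U x) = x)"

text \<open>J identifies H with a (closed) subspace of K: linear and inner-product preserving.\<close>
definition isometric_embedding ::
  "('a, 'm) chspace_scheme \<Rightarrow> ('b, 'n) chspace_scheme \<Rightarrow> ('a \<Rightarrow> 'b) \<Rightarrow> bool" where
  "isometric_embedding H K J \<longleftrightarrow>
     (\<forall>h\<in>hcarrier H. J h \<in> hcarrier K) \<and>
     (\<forall>x\<in>hcarrier H. \<forall>y\<in>hcarrier H. J (hadd H x y) = hadd K (J x) (J y)) \<and>
     (\<forall>a. \<forall>x\<in>hcarrier H. J (hscale H a x) = hscale K a (J x)) \<and>
     (\<forall>x\<in>hcarrier H. \<forall>y\<in>hcarrier H. hinner K (J x) (J y) = hinner H x y)"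

definition orth_to :: "('v, 'm) chspace_scheme \<Rightarrow> 'v set \<Rightarrow> 'v \<Rightarrow> bool" where
  "orth_to K M k \<longleftrightarrow> (\<forall>s\<in>M. hinner K s k = 0)"

definition reduces :: "('v, 'm) chspace_scheme \<Rightarrow> 'v set \<Rightarrow> ('v \<Rightarrow> 'v) \<Rightarrow> bool" where
  "reduces K M T \<longleftrightarrow> (\<forall>k\<in>M. T k \<in> M) \<and>
     (\<forall>k\<in>hcarrier K. orth_to K M k \<longrightarrow> orth_to K M (T k))"

text \<open>T = P_H S|_H (H identified with J(H)); since P_H S J h lies in J(H), this is
  equivalent to the stated equality of inner products against all of J(H).\<close>
definition compression ::
  "('a, 'm) chspace_scheme \<Rightarrow> ('b, 'n) chspace_scheme \<Rightarrow> ('a \<Rightarrow> 'b) \<Rightarrow> ('b \<Rightarrow> 'b) \<Rightarrow> ('a \<Rightarrow> 'a) \<Rightarrow> bool" where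
  "compression H K J S T \<longleftrightarrow>
     (\<forall>h\<in>hcarrier H. \<forall>h'\<in>hcarrier H. hinner K (J h') (S (J h)) = hinner H h' (T h))"

definition lifting ::
  "('a, 'm) chspace_scheme \<Rightarrow> ('b, 'n) chspace_scheme \<Rightarrow> ('a \<Rightarrow> 'b) \<Rightarrow> ('b \<Rightarrow> 'b) \<Rightarrow> ('a \<Rightarrow> 'a) \<Rightarrow> bool" where
  "lifting H K J S T \<longleftrightarrow>
     (\<forall>k\<in>hcarrier K. orth_to K (J ` hcarrier H) k \<longrightarrow> orth_to K (J ` hcarrier H) (S k)) \<and>
     compression H K J S T"

end

theory Submission
  imports Defs
begin

locale hs =
  fixes V :: "('v, 'm) chspace_scheme"
  assumes hs: "complex_hilbert_space V"
begin

lemma hs_conj: "(hzero V \<in> hcarrier V) \<and>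
  (\<forall>x\<in>hcarrier V. \<forall>y\<in>hcarrier V. hadd V x y \<in> hcarrier V) \<and>
  (\<forall>a. \<forall>x\<in>hcarrier V. hscale V a x \<in> hcarrier V) \<and>
  (\<forall>x\<in>hcarrier V. \<forall>y\<in>hcarrier V. \<forall>z\<in>hcarrier V. hadd V (hadd V x y) z = hadd V x (hadd V y z)) \<and>
  (\<forall>x\<in>hcarrier V. \<forall>y\<in>hcarrier V. hadd V x y = hadd V y x) \<and>
  (\<forall>x\<in>hcarrier V. hadd V (hzero V) x = x) \<and>
  (\<forall>x\<in>hcarrier V. hscale V 0 x = hzero V) \<and>
  (\<forall>x\<in>hcarrier V. hscale V 1 x = x) \<and>
  (\<forall>a b. \<forall>x\<in>hcarrier V. hscale V a (hscale V b x) = hscale V (a * b) x) \<and>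
  (\<forall>a b. \<forall>x\<in>hcarrier V. hscale V (a + b) x = hadd V (hscale V a x) (hscale V b x)) \<and>
  (\<forall>a. \<forall>x\<in>hcarrier V. \<forall>y\<in>hcarrier V. hscale V a (hadd V x y) = hadd V (hscale V a x) (hscale V a y)) \<and>
  (\<forall>x\<in>hcarrier V. \<forall>y\<in>hcarrier V. hinner V x y = cnj (hinner V y x)) \<and>
  (\<forall>x\<in>hcarrier V. \<forall>y\<in>hcarrier V. \<forall>z\<in>hcarrier V. hinner V x (hadd V y z) = hinner V x y + hinner V x z) \<and>
  (\<forall>a. \<forall>x\<in>hcarrier V. \<forall>y\<in>hcarrier V. hinner V x (hscale V a y) = a * hinner V x y) \<and>
  (\<forall>x\<in>hcarrier V. Im (hinner V x x) = 0 \<and> Re (hinner V x x) \<ge> 0) \<and>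
  (\<forall>x\<in>hcarrier V. hinner V x x = 0 \<longrightarrow> x = hzero V) \<and>
  (\<forall>f :: nat \<Rightarrow> 'v. (\<forall>n. f n \<in> hcarrier V) \<and> (\<forall>e>0. \<exists>N. \<forall>m\<ge>N. \<forall>n\<ge>N. hnorm V (hdiff V (f m) (f n)) < e) \<longrightarrow> (\<exists>l\<in>hcarrier V. (\<lambda>n. hnorm V (hdiff V (f n) l)) \<longlonglongrightarrow> 0))"
  using hs unfolding complex_hilbert_space_def Let_def .

lemma axq1: "hzero V \<in> hcarrier V"
  using hs_conj by (elim conjE) assumption
lemma axq2: "\<forall>x\<in>hcarrier V. \<forall>y\<in>hcarrier V. hadd V x y \<in> hcarrier V"
  using hs_conj by (elim conjE) assumption
lemma axq3: "\<forall>a. \<forall>x\<in>hcarrier V. hscale V a x \<in> hcarrier V"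
  using hs_conj by (elim conjE) assumption
lemma axq4: "\<forall>x\<in>hcarrier V. \<forall>y\<in>hcarrier V. \<forall>z\<in>hcarrier V. hadd V (hadd V x y) z = hadd V x (hadd V y z)"
  using hs_conj by (elim conjE) assumption
lemma axq5: "\<forall>x\<in>hcarrier V. \<forall>y\<in>hcarrier V. hadd V x y = hadd V y x"
  using hs_conj by (elim conjE) assumption
lemma axq6: "\<forall>x\<in>hcarrier V. hadd V (hzero V) x = x"
  using hs_conj by (elim conjE) assumption
lemma axq7: "\<forall>x\<in>hcarrier V. hscale V 0 x = hzero V"
  using hs_conj by (elim conjE) assumption
lemma axq8: "\<forall>x\<in>hcarrier V. hscale V 1 x = x"
  using hs_conj by (elim conjE) assumption
lemma axq9: "\<forall>a b. \<forall>x\<in>hcarrier V. hscale V a (hscale V b x) = hscale V (a * b) x"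
  using hs_conj by (elim conjE) assumption
lemma axq10: "\<forall>a b. \<forall>x\<in>hcarrier V. hscale V (a + b) x = hadd V (hscale V a x) (hscale V b x)"
  using hs_conj by (elim conjE) assumption
lemma axq11: "\<forall>a. \<forall>x\<in>hcarrier V. \<forall>y\<in>hcarrier V. hscale V a (hadd V x y) = hadd V (hscale V a x) (hscale V a y)"
  using hs_conj by (elim conjE) assumption
lemma axq12: "\<forall>x\<in>hcarrier V. \<forall>y\<in>hcarrier V. hinner V x y = cnj (hinner V y x)"
  using hs_conj by (elim conjE) assumption
lemma axq13: "\<forall>x\<in>hcarrier V. \<forall>y\<in>hcarrier V. \<forall>z\<in>hcarrier V. hinner V x (hadd V y z) = hinner V x y + hinner V x z"
  using hs_conj by (elim conjE) assumption
lemma axq14: "\<forall>a. \<forall>x\<in>hcarrier V. \<forall>y\<in>hcarrier V. hinner V x (hscale V a y) = a * hinner V x y"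
  using hs_conj by (elim conjE) assumption
lemma axq15: "\<forall>x\<in>hcarrier V. Im (hinner V x x) = 0 \<and> Re (hinner V x x) \<ge> 0"
  using hs_conj by (elim conjE) assumption
lemma axq16: "\<forall>x\<in>hcarrier V. hinner V x x = 0 \<longrightarrow> x = hzero V"
  using hs_conj by (elim conjE) assumption
lemma axq17: "\<forall>f :: nat \<Rightarrow> 'v. (\<forall>n. f n \<in> hcarrier V) \<and> (\<forall>e>0. \<exists>N. \<forall>m\<ge>N. \<forall>n\<ge>N. hnorm V (hdiff V (f m) (f n)) < e) \<longrightarrow> (\<exists>l\<in>hcarrier V. (\<lambda>n. hnorm V (hdiff V (f n) l)) \<longlonglongrightarrow> 0)"
  using hs_conj by (elim conjE) assumption

lemma ax:
  "hzero V \<in> hcarrier V"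
  "\<And>x y. x \<in> hcarrier V \<Longrightarrow> y \<in> hcarrier V \<Longrightarrow> hadd V x y \<in> hcarrier V"
  "\<And>a x. x \<in> hcarrier V \<Longrightarrow> hscale V a x \<in> hcarrier V"
  "\<And>x y z. x \<in> hcarrier V \<Longrightarrow> y \<in> hcarrier V \<Longrightarrow> z \<in> hcarrier V \<Longrightarrow> hadd V (hadd V x y) z = hadd V x (hadd V y z)"
  "\<And>x y. x \<in> hcarrier V \<Longrightarrow> y \<in> hcarrier V \<Longrightarrow> hadd V x y = hadd V y x"
  "\<And>x. x \<in> hcarrier V \<Longrightarrow> hadd V (hzero V) x = x"
  "\<And>x. x \<in> hcarrier V \<Longrightarrow> hscale V 0 x = hzero V"
  "\<And>x. x \<in> hcarrier V \<Longrightarrow> hscale V 1 x = x"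
  "\<And>a b x. x \<in> hcarrier V \<Longrightarrow> hscale V a (hscale V b x) = hscale V (a * b) x"
  "\<And>a b x. x \<in> hcarrier V \<Longrightarrow> hscale V (a + b) x = hadd V (hscale V a x) (hscale V b x)"
  "\<And>a x y. x \<in> hcarrier V \<Longrightarrow> y \<in> hcarrier V \<Longrightarrow> hscale V a (hadd V x y) = hadd V (hscale V a x) (hscale V a y)"
  "\<And>x y. x \<in> hcarrier V \<Longrightarrow> y \<in> hcarrier V \<Longrightarrow> hinner V x y = cnj (hinner V y x)"
  "\<And>x y z. x \<in> hcarrier V \<Longrightarrow> y \<in> hcarrier V \<Longrightarrow> z \<in> hcarrier V \<Longrightarrow> hinner V x (hadd V y z) = hinner V x y + hinner V x z"
  "\<And>a x y. x \<in> hcarrier V \<Longrightarrow> y \<in> hcarrier V \<Longrightarrow> hinner V x (hscale V a y) = a * hinner V x y"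
  "\<And>x. x \<in> hcarrier V \<Longrightarrow> Im (hinner V x x) = 0 \<and> Re (hinner V x x) \<ge> 0"
  "\<And>x. x \<in> hcarrier V \<Longrightarrow> hinner V x x = 0 \<Longrightarrow> x = hzero V"
  "\<And>f :: nat \<Rightarrow> 'v. (\<forall>n. f n \<in> hcarrier V) \<Longrightarrow>
           (\<forall>e>0. \<exists>N. \<forall>m\<ge>N. \<forall>n\<ge>N. hnorm V (hdiff V (f m) (f n)) < e)
           \<Longrightarrow> (\<exists>l\<in>hcarrier V. (\<lambda>n. hnorm V (hdiff V (f n) l)) \<longlonglongrightarrow> 0)"
  using axq1 apply blast
  using axq2 apply blast
  using axq3 apply blast
  using axq4 apply blast
  using axq5 apply blast
  using axq6 apply blast
  using axq7 apply blast
  using axq8 apply blast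
  using axq9 apply blast
  using axq10 apply blast
  using axq11 apply blast
  using axq12 apply blast
  using axq13 apply blast
  using axq14 apply blast
  using axq15 apply blast
  using axq16 apply blast
  using axq17 apply blast
  done

lemmas [simp] = ax(1,2,3)

lemma diff_in [simp]: "x \<in> hcarrier V \<Longrightarrow> y \<in> hcarrier V \<Longrightarrow> hdiff V x y \<in> hcarrier V"
  by (simp add: hdiff_def)

lemma inner_add_right [simp]: "x \<in> hcarrier V \<Longrightarrow> y \<in> hcarrier V \<Longrightarrow> z \<in> hcarrier V \<Longrightarrow> hinner V x (hadd V y z) = hinner V x y + hinner V x z"
  by (rule ax(13))
lemma inner_scale_right [simp]: "x \<in> hcarrier V \<Longrightarrow> y \<in> hcarrier V \<Longrightarrow> hinner V x (hscale V a y) = a * hinner V x y"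
  by (rule ax(14))
lemma inner_add_left [simp]: "x \<in> hcarrier V \<Longrightarrow> y \<in> hcarrier V \<Longrightarrow> z \<in> hcarrier V \<Longrightarrow> hinner V (hadd V y z) x = hinner V y x + hinner V z x"
  by (subst ax(12)) (auto simp: ax(12)[of x y] ax(12)[of x z])
lemma inner_scale_left [simp]: "x \<in> hcarrier V \<Longrightarrow> y \<in> hcarrier V \<Longrightarrow> hinner V (hscale V a y) x = cnj a * hinner V y x"
  by (subst ax(12)) (auto simp: ax(12)[of x y])
lemma inner_diff_right [simp]: "x \<in> hcarrier V \<Longrightarrow> y \<in> hcarrier V \<Longrightarrow> z \<in> hcarrier V \<Longrightarrow> hinner V x (hdiff V y z) = hinner V x y - hinner V x z"
  by (simp add: hdiff_def)
lemma inner_diff_left [simp]: "x \<in> hcarrier V \<Longrightarrow> y \<in> hcarrier V \<Longrightarrow> z \<in> hcarrier V \<Longrightarrow> hinner V (hdiff V y z) x = hinner V y x - hinner V z x"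
  by (simp add: hdiff_def)
lemma inner_zero_right [simp]: "x \<in> hcarrier V \<Longrightarrow> hinner V x (hzero V) = 0"
proof -
  assume x: "x \<in> hcarrier V"
  have "hzero V = hscale V 0 x" using ax(7) x by simp
  then show ?thesis using x by simp
qed
lemma inner_zero_left [simp]: "x \<in> hcarrier V \<Longrightarrow> hinner V (hzero V) x = 0"
  by (subst ax(12)) auto

lemma inner_commute: "x \<in> hcarrier V \<Longrightarrow> y \<in> hcarrier V \<Longrightarrow> hinner V x y = cnj (hinner V y x)"
  by (rule ax(12))

lemma ext_eq:
  assumes x: "x \<in> hcarrier V" and y: "y \<in> hcarrier V"
    and h: "\<And>z. z \<in> hcarrier V \<Longrightarrow> hinner V z x = hinner V z y"
  shows "x = y"
proof -
  let ?d = "hdiff V x y"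
  have d: "?d \<in> hcarrier V" using x y by simp
  have "hinner V ?d ?d = 0" using h[OF d] x y d by simp
  then have d0: "?d = hzero V" using ax(16) d by blast
  have "x = hadd V (hzero V) x" using ax(6) x by simp
  also have "\<dots> = hadd V (hscale V (-1 + 1) y) x" using ax(7) y by simp
  also have "\<dots> = hadd V (hadd V (hscale V (-1) y) (hscale V 1 y)) x" using ax(10)[OF y, of "-1" 1] by simp
  also have "\<dots> = hadd V (hadd V (hscale V (-1) y) y) x" using ax(8) y by simp
  also have "\<dots> = hadd V (hadd V y (hscale V (-1) y)) x" using ax(5) y by simp
  also have "\<dots> = hadd V y (hadd V (hscale V (-1) y) x)" using ax(4) x y by simp
  also have "\<dots> = hadd V y ?d" using ax(5) x y by (simp add: hdiff_def)
  also have "\<dots> = y" using d0 ax(5)[of y "hzero V"] ax(6) y by simp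
  finally show ?thesis .
qed

lemma ext_eq_iff:
  assumes x: "x \<in> hcarrier V" and y: "y \<in> hcarrier V"
  shows "x = y \<longleftrightarrow> (\<forall>z\<in>hcarrier V. hinner V z x = hinner V z y)"
  using ext_eq[OF x y] by auto

lemma inner_self_real: "x \<in> hcarrier V \<Longrightarrow> hinner V x x = complex_of_real (Re (hinner V x x))"
  using ax(15)[of x] by (simp add: complex_eq_iff)

lemma inner_self_eqI: "x \<in> hcarrier V \<Longrightarrow> Re (hinner V x x) = r \<Longrightarrow> hinner V x x = complex_of_real r"
  using inner_self_real[of x] by metis

lemma inner_self_nonneg: "x \<in> hcarrier V \<Longrightarrow> Re (hinner V x x) \<ge> 0"
  using ax(15)[of x] by simp

lemma norm_sq: "x \<in> hcarrier V \<Longrightarrow> (hnorm V x)^2 = Re (hinner V x x)"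
  unfolding hnorm_def using inner_self_nonneg[of x] by simp

lemma norm_nonneg [simp]: "x \<in> hcarrier V \<Longrightarrow> hnorm V x \<ge> 0"
  unfolding hnorm_def using inner_self_nonneg[of x] by simp

lemma inner_self_norm: "x \<in> hcarrier V \<Longrightarrow> hinner V x x = complex_of_real ((hnorm V x)^2)"
  using inner_self_eqI norm_sq by metis

lemma norm_zero_iff: "x \<in> hcarrier V \<Longrightarrow> hnorm V x = 0 \<longleftrightarrow> x = hzero V"
proof
  assume x: "x \<in> hcarrier V" and "hnorm V x = 0"
  then have "hinner V x x = 0" using inner_self_norm by simp
  then show "x = hzero V" using ax(16) x by blast
next
  assume x: "x \<in> hcarrier V" and "x = hzero V"
  then show "hnorm V x = 0" unfolding hnorm_def by simp
qed

lemma norm_zero [simp]: "hnorm V (hzero V) = 0"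
  using norm_zero_iff by simp

lemma cauchy_schwarz:
  assumes x: "x \<in> hcarrier V" and y: "y \<in> hcarrier V"
  shows "cmod (hinner V x y) \<le> hnorm V x * hnorm V y"
proof (cases "y = hzero V")
  case True then show ?thesis using x by simp
next
  case False
  define b where "b = Re (hinner V y y)"
  define c where "c = hinner V y x"
  define a where "a = Re (hinner V x x)"
  have bpos: "b > 0"
  proof -
    have "b \<ge> 0" unfolding b_def using inner_self_nonneg y by simp
    moreover have "b \<noteq> 0"
    proof
      assume "b = 0"
      then have "hinner V y y = 0" using inner_self_eqI[OF y] unfolding b_def by simp
      then show False using False ax(16) y by blast
    qed
    ultimately show ?thesis by simp
  qed
  define t where "t = c / complex_of_real b"
  let ?u = "hdiff V x (hscale V t y)"
  have u: "?u \<in> hcarrier V" using x y by simp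
  have yy: "hinner V y y = complex_of_real b" using inner_self_eqI[OF y] b_def by simp
  have xx: "hinner V x x = complex_of_real a" using inner_self_eqI[OF x] a_def by simp
  have xy: "hinner V x y = cnj c" using inner_commute[OF x y] c_def by simp
  have "hinner V ?u ?u = complex_of_real a - t * cnj c - cnj t * c + cnj t * t * complex_of_real b"
    using x y yy xx xy c_def by (simp add: algebra_simps)
  also have "\<dots> = complex_of_real a - c * cnj c / complex_of_real b"
    using bpos unfolding t_def by (simp add: field_simps)
  also have "c * cnj c = complex_of_real ((cmod c)^2)"
    using complex_norm_square[of c] by simp
  finally have "hinner V ?u ?u = complex_of_real (a - (cmod c)^2 / b)"
    by simp
  then have "Re (hinner V ?u ?u) = a - (cmod c)^2 / b" by simp
  with inner_self_nonneg[OF u] have "(cmod c)^2 / b \<le> a" by simp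
  then have "(cmod c)^2 \<le> a * b" using bpos by (simp add: field_simps)
  also have "a * b = (hnorm V x * hnorm V y)^2"
    using norm_sq[OF x] norm_sq[OF y] a_def b_def by (simp add: power_mult_distrib)
  finally have "(cmod c)^2 \<le> (hnorm V x * hnorm V y)^2" .
  moreover have "0 \<le> hnorm V x * hnorm V y" using x y by simp
  ultimately have "cmod c \<le> hnorm V x * hnorm V y"
    by (rule power2_le_imp_le)
  moreover have "cmod (hinner V x y) = cmod c" using xy by simp
  ultimately show ?thesis by simp
qed

lemma norm_add_sq:
  assumes x: "x \<in> hcarrier V" and y: "y \<in> hcarrier V"
  shows "(hnorm V (hadd V x y))^2 = (hnorm V x)^2 + (hnorm V y)^2 + 2 * Re (hinner V x y)"
proof -
  have "(hnorm V (hadd V x y))^2 = Re (hinner V (hadd V x y) (hadd V x y))" using norm_sq x y by simp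
  also have "\<dots> = Re (hinner V x x) + Re (hinner V y y) + Re (hinner V x y) + Re (hinner V y x)"
    using x y by simp
  also have "Re (hinner V y x) = Re (hinner V x y)" using inner_commute[OF y x] by simp
  finally show ?thesis using norm_sq x y by simp
qed

lemma norm_triangle:
  assumes x: "x \<in> hcarrier V" and y: "y \<in> hcarrier V"
  shows "hnorm V (hadd V x y) \<le> hnorm V x + hnorm V y"
proof -
  have "Re (hinner V x y) \<le> cmod (hinner V x y)" by (rule complex_Re_le_cmod)
  also have "\<dots> \<le> hnorm V x * hnorm V y" by (rule cauchy_schwarz[OF x y])
  finally have "(hnorm V (hadd V x y))^2 \<le> (hnorm V x + hnorm V y)^2"
    using norm_add_sq[OF x y] by (simp add: power2_sum)
  moreover have "0 \<le> hnorm V x + hnorm V y" using x y by simp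
  ultimately show ?thesis by (rule power2_le_imp_le)
qed

lemma norm_scale:
  assumes x: "x \<in> hcarrier V"
  shows "hnorm V (hscale V a x) = cmod a * hnorm V x"
proof -
  have "(hnorm V (hscale V a x))^2 = Re (hinner V (hscale V a x) (hscale V a x))" using norm_sq x by simp
  also have "hinner V (hscale V a x) (hscale V a x) = cnj a * a * hinner V x x" using x by simp
  also have "cnj a * a = complex_of_real ((cmod a)^2)" using complex_norm_square[of a] by (simp add: mult.commute)
  also have "hinner V x x = complex_of_real ((hnorm V x)^2)" using inner_self_norm[OF x] .
  also have "Re (complex_of_real ((cmod a)^2) * complex_of_real ((hnorm V x)^2)) = (cmod a)^2 * (hnorm V x)^2"
    by simp
  finally have "(hnorm V (hscale V a x))^2 = (cmod a * hnorm V x)^2" by (simp add: power_mult_distrib)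
  then show ?thesis using x by (meson norm_ge_zero mult_nonneg_nonneg norm_nonneg ax(3) power2_eq_iff_nonneg)
qed

lemma norm_diff_commute:
  assumes x: "x \<in> hcarrier V" and y: "y \<in> hcarrier V"
  shows "hnorm V (hdiff V x y) = hnorm V (hdiff V y x)"
proof -
  have "hdiff V y x = hscale V (-1) (hdiff V x y)"
    using x y by (intro ext_eq) (auto simp: algebra_simps)
  then show ?thesis using norm_scale x y by simp
qed

lemma norm_diff_triangle:
  assumes x: "x \<in> hcarrier V" and y: "y \<in> hcarrier V" and z: "z \<in> hcarrier V"
  shows "hnorm V (hdiff V x z) \<le> hnorm V (hdiff V x y) + hnorm V (hdiff V y z)"
proof -
  have "hdiff V x z = hadd V (hdiff V x y) (hdiff V y z)"
    using x y z by (intro ext_eq) auto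
  then show ?thesis using norm_triangle x y z by simp
qed

lemma add_zero_right [simp]: "x \<in> hcarrier V \<Longrightarrow> hadd V x (hzero V) = x"
  by (intro ext_eq) auto
lemma add_zero_left [simp]: "x \<in> hcarrier V \<Longrightarrow> hadd V (hzero V) x = x"
  by (intro ext_eq) auto
lemma scale_zero [simp]: "hscale V a (hzero V) = hzero V"
  by (intro ext_eq) auto

end

context hs
begin

lemma parallelogram:
  assumes x: "x \<in> hcarrier V" and y: "y \<in> hcarrier V"
  shows "(hnorm V (hdiff V x y))^2 + (hnorm V (hadd V x y))^2 = 2 * (hnorm V x)^2 + 2 * (hnorm V y)^2"
proof -
  have "(hnorm V (hdiff V x y))^2 = Re (hinner V (hdiff V x y) (hdiff V x y))" using norm_sq x y by simp
  moreover have "(hnorm V (hadd V x y))^2 = Re (hinner V (hadd V x y) (hadd V x y))" using norm_sq x y by simp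
  moreover have "hinner V (hdiff V x y) (hdiff V x y) + hinner V (hadd V x y) (hadd V x y)
      = 2 * hinner V x x + 2 * hinner V y y" using x y by (simp add: algebra_simps)
  ultimately show ?thesis using norm_sq x y
    by (metis (no_types, lifting) Re_complex_of_real minus_complex.simps(1) mult_2 plus_complex.simps(1) times_complex.simps(1) zero_complex.simps(1) add_diff_cancel_left')
qed

lemma proj_identity:
  assumes x: "x \<in> hcarrier V" and y: "y \<in> hcarrier V" and b: "Re (hinner V y y) > 0"
  shows "Re (hinner V (hdiff V x (hscale V (hinner V y x / complex_of_real (Re (hinner V y y))) y))
                      (hdiff V x (hscale V (hinner V y x / complex_of_real (Re (hinner V y y))) y)))
         = Re (hinner V x x) - (cmod (hinner V y x))^2 / Re (hinner V y y)"
proof -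
  define bb where "bb = Re (hinner V y y)"
  define c where "c = hinner V y x"
  define t where "t = c / complex_of_real bb"
  have yy: "hinner V y y = complex_of_real bb" using inner_self_eqI[OF y] bb_def by simp
  have xy: "hinner V x y = cnj c" using inner_commute[OF x y] c_def by simp
  have "hinner V (hdiff V x (hscale V t y)) (hdiff V x (hscale V t y))
        = hinner V x x - t * cnj c - cnj t * c + cnj t * t * complex_of_real bb"
    using x y yy xy c_def by (simp add: algebra_simps)
  also have "\<dots> = hinner V x x - c * cnj c / complex_of_real bb"
    using b unfolding t_def bb_def[symmetric] by (simp add: field_simps)
  also have "c * cnj c = complex_of_real ((cmod c)^2)"
    using complex_norm_square[of c] by simp
  finally show ?thesis unfolding t_def c_def bb_def by simp
qed

lemma riesz:
  fixes \<phi> :: "'v \<Rightarrow> complex"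
  assumes add: "\<And>x y. x \<in> hcarrier V \<Longrightarrow> y \<in> hcarrier V \<Longrightarrow> \<phi> (hadd V x y) = \<phi> x + \<phi> y"
    and scl: "\<And>a x. x \<in> hcarrier V \<Longrightarrow> \<phi> (hscale V a x) = a * \<phi> x"
    and bnd: "\<And>x. x \<in> hcarrier V \<Longrightarrow> cmod (\<phi> x) \<le> c * hnorm V x"
  shows "\<exists>z\<in>hcarrier V. \<forall>x\<in>hcarrier V. \<phi> x = hinner V z x"
proof (cases "\<forall>x\<in>hcarrier V. \<phi> x = 0")
  case True
  then show ?thesis by (intro bexI[of _ "hzero V"]) auto
next
  case False
  then obtain u where u: "u \<in> hcarrier V" and phiu: "\<phi> u \<noteq> 0" by blast
  have dif: "\<phi> (hdiff V x y) = \<phi> x - \<phi> y" if "x \<in> hcarrier V" "y \<in> hcarrier V" for x y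
    using that add scl by (simp add: hdiff_def)
  define N where "N = {n \<in> hcarrier V. \<phi> n = 0}"
  have zN: "hzero V \<in> N" unfolding N_def using scl[of "hzero V" 0] by simp
  have Nadd: "hadd V a b \<in> N" if "a \<in> N" "b \<in> N" for a b using that add unfolding N_def by auto
  have Nscl: "hscale V s a \<in> N" if "a \<in> N" for a s using that scl unfolding N_def by auto
  define D where "D = (\<lambda>n. hnorm V (hdiff V u n)) ` N"
  define d where "d = Inf D"
  have Dne: "D \<noteq> {}" using zN unfolding D_def by auto
  have Dbdd: "bdd_below D" unfolding D_def using u N_def
    by (intro bdd_belowI[of _ 0]) auto
  have dle: "d \<le> hnorm V (hdiff V u n)" if "n \<in> N" for n
    unfolding d_def D_def using Dbdd that unfolding D_def by (intro cInf_lower) auto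
  have d0: "d \<ge> 0" unfolding d_def
  proof (rule cInf_greatest[OF Dne])
    fix r assume "r \<in> D"
    then obtain n where "n \<in> N" "r = hnorm V (hdiff V u n)" unfolding D_def by blast
    then show "0 \<le> r" using u unfolding N_def by simp
  qed
  have "\<forall>k::nat. \<exists>n\<in>N. hnorm V (hdiff V u n) < d + 1 / (real k + 1)"
  proof
    fix k :: nat
    have "d < d + 1 / (real k + 1)" by simp
    then obtain r where "r \<in> D" "r < d + 1 / (real k + 1)" unfolding d_def using Dne cInf_lessD by blast
    then show "\<exists>n\<in>N. hnorm V (hdiff V u n) < d + 1 / (real k + 1)" unfolding D_def by auto
  qed
  then have "\<exists>ns. \<forall>k. ns k \<in> N \<and> hnorm V (hdiff V u (ns k)) < d + 1 / (real k + 1)"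
    by (intro choice) blast
  then obtain ns where nsN: "\<And>k. ns k \<in> N" and nsd: "\<And>k. hnorm V (hdiff V u (ns k)) < d + 1 / (real k + 1)"
    by blast
  have nsC: "ns k \<in> hcarrier V" for k using nsN unfolding N_def by auto
  have sqb: "(hnorm V (hdiff V u (ns k)))^2 \<le> d^2 + (2*d+1) / (real k + 1)" for k
  proof -
    define t where "t = 1 / (real k + 1)"
    have t0: "0 \<le> t" and t1: "t \<le> 1" unfolding t_def by (auto simp: field_simps)
    have "(hnorm V (hdiff V u (ns k)))^2 \<le> (d + t)^2"
      using nsd[of k] u nsC[of k] unfolding t_def by (intro power_mono) auto
    also have "\<dots> = d^2 + 2*d*t + t*t"
      by (simp add: power2_eq_square algebra_simps)
    also have "t * t \<le> t" using t0 t1 by (simp add: mult_left_le_one_le)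
    finally have "(hnorm V (hdiff V u (ns k)))^2 \<le> d^2 + (2*d+1) * t" by (simp add: algebra_simps)
    then show ?thesis unfolding t_def by simp
  qed
  have cauchy_est: "(hnorm V (hdiff V (ns k) (ns m)))^2 \<le> 2 * ((2*d+1) / (real k + 1)) + 2 * ((2*d+1) / (real m + 1))" for k m
  proof -
    let ?x = "hdiff V u (ns k)" and ?y = "hdiff V u (ns m)"
    define mid where "mid = hscale V (1/2) (hadd V (ns k) (ns m))"
    have midN: "mid \<in> N" unfolding mid_def using nsN by (intro Nscl Nadd)
    have midC: "mid \<in> hcarrier V" using midN N_def by auto
    have e1: "hdiff V ?x ?y = hdiff V (ns m) (ns k)"
      using u nsC by (intro ext_eq) auto
    have e2: "hadd V ?x ?y = hscale V 2 (hdiff V u mid)"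
      using u nsC unfolding mid_def by (intro ext_eq) (auto simp: algebra_simps)
    have "hnorm V (hadd V ?x ?y) = 2 * hnorm V (hdiff V u mid)"
      using e2 norm_scale u midC by simp
    moreover have "d \<le> hnorm V (hdiff V u mid)" using dle midN by simp
    ultimately have "4 * d^2 \<le> (hnorm V (hadd V ?x ?y))^2"
      using d0 by (simp add: power_mult_distrib power_mono)
    moreover have "(hnorm V (hdiff V (ns k) (ns m)))^2 + (hnorm V (hadd V ?x ?y))^2 = 2 * (hnorm V ?x)^2 + 2 * (hnorm V ?y)^2"
    proof -
      have "hnorm V (hdiff V ?x ?y) = hnorm V (hdiff V (ns k) (ns m))"
        using e1 norm_diff_commute nsC by simp
      moreover have "(hnorm V (hdiff V ?x ?y))^2 + (hnorm V (hadd V ?x ?y))^2 = 2 * (hnorm V ?x)^2 + 2 * (hnorm V ?y)^2"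
        using parallelogram u nsC by simp
      ultimately show ?thesis by simp
    qed
    ultimately show ?thesis using sqb[of k] sqb[of m] by linarith
  qed
  have "\<exists>l\<in>hcarrier V. (\<lambda>n. hnorm V (hdiff V (ns n) l)) \<longlonglongrightarrow> 0"
  proof (rule ax(17))
    show "\<forall>n. ns n \<in> hcarrier V" using nsC by simp
    show "\<forall>e>0. \<exists>N. \<forall>m\<ge>N. \<forall>n\<ge>N. hnorm V (hdiff V (ns m) (ns n)) < e"
    proof (intro allI impI)
      fix e :: real assume e: "e > 0"
      obtain K :: nat where K: "4 * (2*d+1) / e^2 < real K" using reals_Archimedean2 by blast
      have Kpos: "real K + 1 > 0" by simp
      have "e^2 > 0" using e by simp
      have k1: "4*(2*d+1) < real K * e^2" using K e by (simp add: field_simps)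
      have "e^2 * (real K + 1) = real K * e^2 + e^2" by (simp add: algebra_simps)
      have k2: "4*(2*d+1) < e^2 * (real K + 1)" using k1 \<open>e^2 > 0\<close> \<open>e^2 * (real K + 1) = real K * e^2 + e^2\<close> by linarith
      have "4 * (2*d+1) / (real K + 1) < e^2"
        using k2 Kpos by (simp add: pos_divide_less_eq)
      show "\<exists>N. \<forall>m\<ge>N. \<forall>n\<ge>N. hnorm V (hdiff V (ns m) (ns n)) < e"
      proof (intro exI allI impI)
        fix m n assume m: "K \<le> m" and n: "K \<le> n"
        have a1: "(2*d+1) / (real m + 1) \<le> (2*d+1) / (real K + 1)"
          using m d0 by (intro divide_left_mono) auto
        have a2: "(2*d+1) / (real n + 1) \<le> (2*d+1) / (real K + 1)"
          using n d0 by (intro divide_left_mono) auto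
        have a3: "4 * ((2*d+1) / (real K + 1)) < e^2"
          using \<open>4 * (2*d+1) / (real K + 1) < e^2\<close> by simp
        have "(hnorm V (hdiff V (ns m) (ns n)))^2 < e^2"
          using cauchy_est[of m n] a1 a2 a3 by linarith
        then show "hnorm V (hdiff V (ns m) (ns n)) < e"
          using e by (meson abs_le_square_iff less_le_not_le power2_less_imp_less less_imp_le)
      qed
    qed
  qed
  then obtain l where l: "l \<in> hcarrier V" and lim: "(\<lambda>n. hnorm V (hdiff V (ns n) l)) \<longlonglongrightarrow> 0" by blast
  have phil: "\<phi> l = 0"
  proof -
    have "cmod (\<phi> l) \<le> c * hnorm V (hdiff V (ns k) l)" for k
    proof -
      have "\<phi> (hdiff V l (ns k)) = \<phi> l" using dif l nsC nsN unfolding N_def by simp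
      then have "cmod (\<phi> l) \<le> c * hnorm V (hdiff V l (ns k))" using bnd l nsC by (metis diff_in)
      then show ?thesis using norm_diff_commute l nsC by simp
    qed
    moreover have "(\<lambda>k. c * hnorm V (hdiff V (ns k) l)) \<longlonglongrightarrow> 0"
      using tendsto_mult_right_zero[OF lim] by simp
    ultimately have "cmod (\<phi> l) \<le> 0"
      by (intro tendsto_lowerbound[OF _ _ trivial_limit_sequentially]) auto
    then show ?thesis by simp
  qed
  then have lN: "l \<in> N" unfolding N_def using l by simp
  define v where "v = hdiff V u l"
  have vC: "v \<in> hcarrier V" unfolding v_def using u l by simp
  have phiv: "\<phi> v = \<phi> u" unfolding v_def using dif u l phil by simp
  have vnorm: "hnorm V v \<le> d"
  proof -
    have "hnorm V v \<le> d + 1 / (real k + 1) + hnorm V (hdiff V (ns k) l)" for k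
    proof -
      have "hnorm V v \<le> hnorm V (hdiff V u (ns k)) + hnorm V (hdiff V (ns k) l)"
        unfolding v_def using norm_diff_triangle u nsC l by blast
      then show ?thesis using nsd[of k] by simp
    qed
    moreover have "(\<lambda>k. d + 1 / (real k + 1) + hnorm V (hdiff V (ns k) l)) \<longlonglongrightarrow> d + 0 + 0"
    proof (intro tendsto_add tendsto_const lim)
      show "(\<lambda>k. 1 / (real k + 1)) \<longlonglongrightarrow> 0"
      proof -
        have "(\<lambda>n. 1 / real n) \<longlonglongrightarrow> 0" by (rule lim_1_over_n)
        from LIMSEQ_Suc[OF this] show ?thesis by (simp add: add.commute)
      qed
    qed
    ultimately show ?thesis
      by (intro tendsto_le[OF trivial_limit_sequentially _ tendsto_const]) auto
  qed
  have orth: "hinner V n v = 0" if nN: "n \<in> N" for n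
  proof (rule ccontr)
    assume ne: "hinner V n v \<noteq> 0"
    have nC: "n \<in> hcarrier V" using nN N_def by auto
    have nnz: "n \<noteq> hzero V" using ne vC by auto
    have bpos: "Re (hinner V n n) > 0"
      using inner_self_nonneg[OF nC] ax(16)[OF nC] inner_self_real[OF nC] nnz
      by (metis less_eq_real_def of_real_0)
    define t where "t = hinner V n v / complex_of_real (Re (hinner V n n))"
    have m1: "hadd V l (hscale V t n) \<in> N" using lN nN by (intro Nadd Nscl)
    have eq: "hdiff V u (hadd V l (hscale V t n)) = hdiff V v (hscale V t n)"
      unfolding v_def using u l nC by (intro ext_eq) auto
    have "d \<le> hnorm V (hdiff V v (hscale V t n))" using dle[OF m1] eq by simp
    then have "(hnorm V v)^2 \<le> (hnorm V (hdiff V v (hscale V t n)))^2"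
      using vnorm vC by (meson norm_nonneg order_trans power_mono)
    also have "\<dots> = (hnorm V v)^2 - (cmod (hinner V n v))^2 / Re (hinner V n n)"
      using proj_identity[OF vC nC bpos] norm_sq vC nC unfolding t_def by simp
    finally have "(cmod (hinner V n v))^2 / Re (hinner V n n) \<le> 0" by simp
    then have "(cmod (hinner V n v))^2 \<le> 0" using bpos by (simp add: divide_le_0_iff)
    then show False using ne by simp
  qed
  have vnz: "v \<noteq> hzero V" using phiv phiu scl[of "hzero V" 0] by auto
  define w where "w = Re (hinner V v v)"
  have wpos: "w > 0"
    using inner_self_nonneg[OF vC] ax(16)[OF vC] inner_self_real[OF vC] vnz unfolding w_def
    by (metis less_eq_real_def of_real_0)
  define z where "z = hscale V (cnj (\<phi> v) / complex_of_real w) v"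
  show ?thesis
  proof (intro bexI[of _ z] ballI)
    show "z \<in> hcarrier V" unfolding z_def using vC by simp
    fix x assume x: "x \<in> hcarrier V"
    define y where "y = hdiff V x (hscale V (\<phi> x / \<phi> v) v)"
    have yC: "y \<in> hcarrier V" unfolding y_def using x vC by simp
    have "\<phi> y = \<phi> x - \<phi> x / \<phi> v * \<phi> v" unfolding y_def using dif x vC scl by simp
    then have "\<phi> y = 0" using phiv phiu by simp
    then have "y \<in> N" unfolding N_def using yC by simp
    then have "hinner V y v = 0" by (rule orth)
    then have "hinner V x v = cnj (\<phi> x / \<phi> v) * hinner V v v" unfolding y_def using x vC by simp
    moreover have "hinner V v v = complex_of_real w" using inner_self_eqI[OF vC] w_def by simp
    ultimately have "hinner V v x = (\<phi> x / \<phi> v) * complex_of_real w"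
      using inner_commute[OF vC x] by simp
    then show "\<phi> x = hinner V z x"
      unfolding z_def using x vC wpos phiv phiu by (simp add: field_simps)
  qed
qed

lemma bounded_opD:
  assumes "bounded_op V T"
  shows "\<And>x. x \<in> hcarrier V \<Longrightarrow> T x \<in> hcarrier V"
    and "\<And>x y. x \<in> hcarrier V \<Longrightarrow> y \<in> hcarrier V \<Longrightarrow> T (hadd V x y) = hadd V (T x) (T y)"
    and "\<And>a x. x \<in> hcarrier V \<Longrightarrow> T (hscale V a x) = hscale V a (T x)"
    and "\<exists>c>0. \<forall>x\<in>hcarrier V. hnorm V (T x) \<le> c * hnorm V x"
proof -
  show "\<And>x. x \<in> hcarrier V \<Longrightarrow> T x \<in> hcarrier V" using assms unfolding bounded_op_def by blast
  show "\<And>x y. x \<in> hcarrier V \<Longrightarrow> y \<in> hcarrier V \<Longrightarrow> T (hadd V x y) = hadd V (T x) (T y)" using assms unfolding bounded_op_def by blast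
  show "\<And>a x. x \<in> hcarrier V \<Longrightarrow> T (hscale V a x) = hscale V a (T x)" using assms unfolding bounded_op_def by blast
  obtain c where c: "\<forall>x\<in>hcarrier V. hnorm V (T x) \<le> c * hnorm V x" using assms unfolding bounded_op_def by blast
  show "\<exists>c>0. \<forall>x\<in>hcarrier V. hnorm V (T x) \<le> c * hnorm V x"
  proof (intro exI[of _ "max c 1"] conjI ballI)
    fix x assume x: "x \<in> hcarrier V"
    have "c * hnorm V x \<le> max c 1 * hnorm V x" using x by (simp add: mult_right_mono)
    then show "hnorm V (T x) \<le> max c 1 * hnorm V x" using c x by force
  qed simp
qed

lemma adjoint_exists:
  assumes T: "bounded_op V T"
  shows "\<exists>S. is_adjoint V T S"
proof -
  note Tin = bounded_opD(1)[OF T] and Tadd = bounded_opD(2)[OF T] and Tscl = bounded_opD(3)[OF T]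
  obtain c where cpos: "c > 0" and c: "\<And>x. x \<in> hcarrier V \<Longrightarrow> hnorm V (T x) \<le> c * hnorm V x"
    using bounded_opD(4)[OF T] by blast
  have ex: "\<exists>z\<in>hcarrier V. \<forall>x\<in>hcarrier V. hinner V (T x) y = hinner V x z" if y: "y \<in> hcarrier V" for y
  proof -
    have "\<exists>z\<in>hcarrier V. \<forall>x\<in>hcarrier V. hinner V y (T x) = hinner V z x"
    proof (rule riesz[where c = "hnorm V y * c"])
      fix x x' assume "x \<in> hcarrier V" "x' \<in> hcarrier V"
      then show "hinner V y (T (hadd V x x')) = hinner V y (T x) + hinner V y (T x')" using y Tadd Tin by simp
    next
      fix a x assume "x \<in> hcarrier V"
      then show "hinner V y (T (hscale V a x)) = a * hinner V y (T x)" using y Tscl Tin by simp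
    next
      fix x assume x: "x \<in> hcarrier V"
      have "cmod (hinner V y (T x)) \<le> hnorm V y * hnorm V (T x)" using cauchy_schwarz y Tin x by blast
      also have "\<dots> \<le> hnorm V y * (c * hnorm V x)" using c[OF x] y by (simp add: mult_left_mono)
      finally show "cmod (hinner V y (T x)) \<le> hnorm V y * c * hnorm V x" by (simp add: mult.assoc)
    qed
    then obtain z where z: "z \<in> hcarrier V" "\<forall>x\<in>hcarrier V. hinner V y (T x) = hinner V z x" by blast
    show ?thesis
    proof (intro bexI[OF _ z(1)] ballI)
      fix x assume x: "x \<in> hcarrier V"
      have "hinner V (T x) y = cnj (hinner V y (T x))" using inner_commute Tin x y by blast
      also have "\<dots> = cnj (hinner V z x)" using z x by simp
      also have "\<dots> = hinner V x z" using inner_commute[OF x z(1)] by simp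
      finally show "hinner V (T x) y = hinner V x z" .
    qed
  qed
  define S where "S y = (SOME z. z \<in> hcarrier V \<and> (\<forall>x\<in>hcarrier V. hinner V (T x) y = hinner V x z))" for y
  have S: "S y \<in> hcarrier V \<and> (\<forall>x\<in>hcarrier V. hinner V (T x) y = hinner V x (S y))" if "y \<in> hcarrier V" for y
  proof -
    from ex[OF that] have "\<exists>z. z \<in> hcarrier V \<and> (\<forall>x\<in>hcarrier V. hinner V (T x) y = hinner V x z)" by blast
    then show ?thesis unfolding S_def by (rule someI_ex)
  qed
  have Sin: "S y \<in> hcarrier V" if "y \<in> hcarrier V" for y using S that by blast
  have Sinner: "hinner V (T x) y = hinner V x (S y)" if "x \<in> hcarrier V" "y \<in> hcarrier V" for x y using S that by blast
  have "bounded_op V S"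
    unfolding bounded_op_def
  proof (intro conjI ballI allI)
    show "S x \<in> hcarrier V" if "x \<in> hcarrier V" for x using Sin that .
    show "S (hadd V x y) = hadd V (S x) (S y)" if "x \<in> hcarrier V" "y \<in> hcarrier V" for x y
      using that Sin Tin by (intro ext_eq) (auto simp flip: Sinner)
    show "S (hscale V a x) = hscale V a (S x)" if "x \<in> hcarrier V" for a x
      using that Sin Tin by (intro ext_eq) (auto simp flip: Sinner)
    show "\<exists>c. \<forall>x\<in>hcarrier V. hnorm V (S x) \<le> c * hnorm V x"
    proof (intro exI ballI)
      fix y assume y: "y \<in> hcarrier V"
      have Sy: "S y \<in> hcarrier V" using Sin y .
      have "(hnorm V (S y))^2 = Re (hinner V (S y) (S y))" using norm_sq Sy by simp
      also have "hinner V (S y) (S y) = hinner V (T (S y)) y"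
        using Sinner[OF Sy y] by simp
      also have "Re (hinner V (T (S y)) y) \<le> cmod (hinner V (T (S y)) y)" by (rule complex_Re_le_cmod)
      also have "\<dots> \<le> hnorm V (T (S y)) * hnorm V y" using cauchy_schwarz Tin Sy y by blast
      also have "\<dots> \<le> (c * hnorm V (S y)) * hnorm V y" using c[OF Sy] y by (simp add: mult_right_mono)
      finally have "(hnorm V (S y))^2 \<le> c * hnorm V (S y) * hnorm V y" by simp
      then show "hnorm V (S y) \<le> c * hnorm V y"
      proof (cases "hnorm V (S y) = 0")
        case True then show ?thesis using cpos y by simp
      next
        case False
        then have pos: "hnorm V (S y) > 0" using norm_nonneg[OF Sy] by linarith
        have "hnorm V (S y) * hnorm V (S y) \<le> hnorm V (S y) * (c * hnorm V y)"
          using \<open>(hnorm V (S y))^2 \<le> c * hnorm V (S y) * hnorm V y\<close> by (simp add: power2_eq_square algebra_simps)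
        then show ?thesis using pos by (simp add: mult_le_cancel_left_pos)
      qed
    qed
  qed
  then show ?thesis unfolding is_adjoint_def using Sinner by blast
qed

lemma hadjoint_is_adjoint:
  assumes "bounded_op V T"
  shows "is_adjoint V T (hadjoint V T)"
  unfolding hadjoint_def using adjoint_exists[OF assms] by (rule someI_ex)

end

definition l2space :: "('v, 'm) chspace_scheme \<Rightarrow> (nat \<Rightarrow> 'v) chspace" where
  "l2space E = \<lparr>hcarrier = {f. (\<forall>n. f n \<in> hcarrier E) \<and> summable (\<lambda>n. (hnorm E (f n))^2)},
     hadd = (\<lambda>f g n. hadd E (f n) (g n)), hzero = (\<lambda>n. hzero E),
     hscale = (\<lambda>a f n. hscale E a (f n)),
     hinner = (\<lambda>f g. \<Sum>n. hinner E (f n) (g n))\<rparr>"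

lemma l2_simps [simp]:
  "hadd (l2space E) f g = (\<lambda>n. hadd E (f n) (g n))"
  "hzero (l2space E) = (\<lambda>n. hzero E)"
  "hscale (l2space E) a f = (\<lambda>n. hscale E a (f n))"
  "hinner (l2space E) f g = (\<Sum>n. hinner E (f n) (g n))"
  by (simp_all add: l2space_def)

lemma l2_carrier: "f \<in> hcarrier (l2space E) \<longleftrightarrow> (\<forall>n. f n \<in> hcarrier E) \<and> summable (\<lambda>n. (hnorm E (f n))^2)"
  by (simp add: l2space_def)

lemma l2_hdiff [simp]: "hdiff (l2space E) f g = (\<lambda>n. hdiff E (f n) (g n))"
  by (simp add: hdiff_def)

context hs
begin

lemma sq_add_bound:
  assumes x: "x \<in> hcarrier V" and y: "y \<in> hcarrier V"
  shows "(hnorm V (hadd V x y))^2 \<le> 2 * (hnorm V x)^2 + 2 * (hnorm V y)^2"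
proof -
  have "(hnorm V (hadd V x y))^2 \<le> (hnorm V x + hnorm V y)^2"
    using norm_triangle[OF x y] x y by (intro power_mono) auto
  also have "\<dots> \<le> 2 * (hnorm V x)^2 + 2 * (hnorm V y)^2"
    by (simp add: power2_sum) (smt (verit) sum_squares_bound)
  finally show ?thesis .
qed

lemma inner_bound:
  assumes x: "x \<in> hcarrier V" and y: "y \<in> hcarrier V"
  shows "cmod (hinner V x y) \<le> ((hnorm V x)^2 + (hnorm V y)^2) / 2"
proof -
  have "cmod (hinner V x y) \<le> hnorm V x * hnorm V y" by (rule cauchy_schwarz[OF x y])
  also have "\<dots> \<le> ((hnorm V x)^2 + (hnorm V y)^2) / 2"
    using sum_squares_bound[of "hnorm V x" "hnorm V y"] by (simp add: field_simps)
  finally show ?thesis .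
qed

lemma l2_summable_inner:
  assumes f: "f \<in> hcarrier (l2space V)" and g: "g \<in> hcarrier (l2space V)"
  shows "summable (\<lambda>n. hinner V (f n) (g n))"
proof (rule summable_norm_cancel, rule summable_comparison_test)
  show "\<exists>N. \<forall>n\<ge>N. norm (cmod (hinner V (f n) (g n))) \<le> ((hnorm V (f n))^2 + (hnorm V (g n))^2) / 2"
    using f g inner_bound unfolding l2_carrier by auto
  show "summable (\<lambda>n. ((hnorm V (f n))^2 + (hnorm V (g n))^2) / 2)"
    using f g unfolding l2_carrier by (intro summable_divide summable_add) auto
qed

lemma l2_inner_self:
  assumes f: "f \<in> hcarrier (l2space V)"
  shows "hinner (l2space V) f f = complex_of_real (\<Sum>n. (hnorm V (f n))^2)"
proof -
  have s: "summable (\<lambda>n. (hnorm V (f n))^2)" using f unfolding l2_carrier by auto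
  have "hinner (l2space V) f f = (\<Sum>n. complex_of_real ((hnorm V (f n))^2))"
    using f inner_self_norm unfolding l2_carrier by simp
  also have "\<dots> = complex_of_real (\<Sum>n. (hnorm V (f n))^2)"
    by (rule suminf_of_real[OF s, symmetric])
  finally show ?thesis .
qed

lemma l2_norm_sq:
  assumes f: "f \<in> hcarrier (l2space V)"
  shows "(hnorm (l2space V) f)^2 = (\<Sum>n. (hnorm V (f n))^2)"
proof -
  have s: "summable (\<lambda>n. (hnorm V (f n))^2)" using f unfolding l2_carrier by auto
  have "0 \<le> (\<Sum>n. (hnorm V (f n))^2)" using s by (intro suminf_nonneg) auto
  have "hnorm (l2space V) f = sqrt (Re (hinner (l2space V) f f))" by (simp only: hnorm_def)
  then show ?thesis using l2_inner_self[OF f] \<open>0 \<le> _\<close> by simp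
qed

lemma l2_norm_nonneg: "f \<in> hcarrier (l2space V) \<Longrightarrow> hnorm (l2space V) f \<ge> 0"
  unfolding hnorm_def using l2_inner_self[of f] l2_carrier[of f V]
  by (simp add: suminf_nonneg)

lemma l2_add_in:
  assumes f: "f \<in> hcarrier (l2space V)" and g: "g \<in> hcarrier (l2space V)"
  shows "hadd (l2space V) f g \<in> hcarrier (l2space V)"
  unfolding l2_carrier l2_simps
proof (intro conjI allI)
  show "hadd V (f n) (g n) \<in> hcarrier V" for n using f g unfolding l2_carrier by auto
  show "summable (\<lambda>n. (hnorm V (hadd V (f n) (g n)))^2)"
  proof (rule summable_comparison_test)
    show "\<exists>N. \<forall>n\<ge>N. norm ((hnorm V (hadd V (f n) (g n)))^2) \<le> 2 * (hnorm V (f n))^2 + 2 * (hnorm V (g n))^2"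
      using f g sq_add_bound unfolding l2_carrier by auto
    show "summable (\<lambda>n. 2 * (hnorm V (f n))^2 + 2 * (hnorm V (g n))^2)"
      using f g unfolding l2_carrier by (intro summable_add summable_mult) auto
  qed
qed

lemma l2_scale_in:
  assumes f: "f \<in> hcarrier (l2space V)"
  shows "hscale (l2space V) a f \<in> hcarrier (l2space V)"
  unfolding l2_carrier l2_simps
proof (intro conjI allI)
  show "hscale V a (f n) \<in> hcarrier V" for n using f unfolding l2_carrier by auto
  have "(\<lambda>n. (hnorm V (hscale V a (f n)))^2) = (\<lambda>n. (cmod a)^2 * (hnorm V (f n))^2)"
    using f norm_scale unfolding l2_carrier by (auto simp: power_mult_distrib)
  then show "summable (\<lambda>n. (hnorm V (hscale V a (f n)))^2)"
    using f unfolding l2_carrier by (simp add: summable_mult)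
qed

lemma l2_zero_in: "hzero (l2space V) \<in> hcarrier (l2space V)"
  unfolding l2_carrier by simp

lemma l2_diff_in:
  assumes f: "f \<in> hcarrier (l2space V)" and g: "g \<in> hcarrier (l2space V)"
  shows "hdiff (l2space V) f g \<in> hcarrier (l2space V)"
  unfolding hdiff_def using l2_add_in l2_scale_in f g by blast

lemma l2_comp_le:
  assumes h: "h \<in> hcarrier (l2space V)"
  shows "hnorm V (h n) \<le> hnorm (l2space V) h"
proof -
  have s: "summable (\<lambda>n. (hnorm V (h n))^2)" and hC: "\<And>n. h n \<in> hcarrier V" using h unfolding l2_carrier by auto
  have "sum (\<lambda>n. (hnorm V (h n))^2) {n} \<le> (\<Sum>n. (hnorm V (h n))^2)"
    by (rule sum_le_suminf[OF s]) auto
  then have "(hnorm V (h n))^2 \<le> (hnorm (l2space V) h)^2" using l2_norm_sq[OF h] by simp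
  then show ?thesis using l2_norm_nonneg[OF h] by (rule power2_le_imp_le)
qed

lemma l2_complete:
  assumes F: "\<And>k. F k \<in> hcarrier (l2space V)"
    and cauchy: "\<forall>e>0. \<exists>N. \<forall>m\<ge>N. \<forall>n\<ge>N. hnorm (l2space V) (hdiff (l2space V) (F m) (F n)) < e"
  shows "\<exists>l\<in>hcarrier (l2space V). (\<lambda>k. hnorm (l2space V) (hdiff (l2space V) (F k) l)) \<longlonglongrightarrow> 0"
proof -
  let ?L = "l2space V"
  have FC: "F k n \<in> hcarrier V" for k n using F unfolding l2_carrier by auto
  have Fd: "hdiff ?L (F m) (F k) \<in> hcarrier ?L" for m k using F by (intro l2_diff_in)
  have comp: "hnorm V (hdiff V (F m n) (F k n)) \<le> hnorm ?L (hdiff ?L (F m) (F k))" for m k n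
    using l2_comp_le[OF Fd[of m k], of n] by simp
  have "\<forall>n. \<exists>l\<in>hcarrier V. (\<lambda>k. hnorm V (hdiff V (F k n) l)) \<longlonglongrightarrow> 0"
  proof
    fix n
    show "\<exists>l\<in>hcarrier V. (\<lambda>k. hnorm V (hdiff V (F k n) l)) \<longlonglongrightarrow> 0"
    proof (rule ax(17))
      show "\<forall>k. F k n \<in> hcarrier V" using FC by simp
      show "\<forall>e>0. \<exists>N. \<forall>m\<ge>N. \<forall>k\<ge>N. hnorm V (hdiff V (F m n) (F k n)) < e"
        using cauchy comp by (meson le_less_trans)
    qed
  qed
  then have "\<exists>L0. \<forall>n. L0 n \<in> hcarrier V \<and> (\<lambda>k. hnorm V (hdiff V (F k n) (L0 n))) \<longlonglongrightarrow> 0"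
    by (intro choice) blast
  then obtain L0 where L0C: "\<And>n. L0 n \<in> hcarrier V" and L0lim: "\<And>n. (\<lambda>k. hnorm V (hdiff V (F k n) (L0 n))) \<longlonglongrightarrow> 0"
    by blast
  have conv: "(\<lambda>m. hnorm V (hdiff V (F k n) (F m n))) \<longlonglongrightarrow> hnorm V (hdiff V (F k n) (L0 n))" for k n
  proof (rule tendsto_sandwich)
    let ?c = "hnorm V (hdiff V (F k n) (L0 n))"
    let ?\<delta> = "\<lambda>m. hnorm V (hdiff V (F m n) (L0 n))"
    show "\<forall>\<^sub>F m in sequentially. ?c - ?\<delta> m \<le> hnorm V (hdiff V (F k n) (F m n))"
    proof (intro always_eventually allI)
      fix m
      have "?c \<le> hnorm V (hdiff V (F k n) (F m n)) + hnorm V (hdiff V (F m n) (L0 n))"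
        using norm_diff_triangle FC L0C by blast
      then show "?c - ?\<delta> m \<le> hnorm V (hdiff V (F k n) (F m n))" by simp
    qed
    show "\<forall>\<^sub>F m in sequentially. hnorm V (hdiff V (F k n) (F m n)) \<le> ?c + ?\<delta> m"
    proof (intro always_eventually allI)
      fix m
      have "hnorm V (hdiff V (F k n) (F m n)) \<le> ?c + hnorm V (hdiff V (L0 n) (F m n))"
        using norm_diff_triangle FC L0C by blast
      then show "hnorm V (hdiff V (F k n) (F m n)) \<le> ?c + ?\<delta> m"
        using norm_diff_commute FC L0C by simp
    qed
    show "(\<lambda>m. ?c - ?\<delta> m) \<longlonglongrightarrow> ?c" using tendsto_diff[OF tendsto_const L0lim[of n]] by simp
    show "(\<lambda>m. ?c + ?\<delta> m) \<longlonglongrightarrow> ?c" using tendsto_add[OF tendsto_const L0lim[of n]] by simp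
  qed
  define h where "h k = hdiff ?L (F k) L0" for k
  have hC: "h k n \<in> hcarrier V" for k n unfolding h_def using FC L0C by simp
  have bound: "summable (\<lambda>n. (hnorm V (h k n))^2) \<and> (\<Sum>n. (hnorm V (h k n))^2) \<le> e^2"
    if N: "\<forall>m\<ge>N. \<forall>n\<ge>N. hnorm ?L (hdiff ?L (F m) (F n)) < e" and kN: "k \<ge> N" and e: "e > 0" for e N k
  proof -
    have ps: "(\<Sum>n<M. (hnorm V (h k n))^2) \<le> e^2" for M
    proof -
      have "(\<lambda>m. \<Sum>n<M. (hnorm V (hdiff V (F k n) (F m n)))^2) \<longlonglongrightarrow> (\<Sum>n<M. (hnorm V (hdiff V (F k n) (L0 n)))^2)"
        by (intro tendsto_sum tendsto_power conv)
      moreover have "\<forall>\<^sub>F m in sequentially. (\<Sum>n<M. (hnorm V (hdiff V (F k n) (F m n)))^2) \<le> e^2"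
      proof (rule eventually_sequentiallyI[of N])
        fix m assume mN: "N \<le> m"
        have s: "summable (\<lambda>n. (hnorm V (hdiff V (F k n) (F m n)))^2)"
          using Fd[of k m] unfolding l2_carrier by simp
        have "(\<Sum>n<M. (hnorm V (hdiff V (F k n) (F m n)))^2) \<le> (\<Sum>n. (hnorm V (hdiff V (F k n) (F m n)))^2)"
          by (rule sum_le_suminf[OF s]) auto
        also have "\<dots> = (hnorm ?L (hdiff ?L (F k) (F m)))^2"
          using l2_norm_sq[OF Fd[of k m]] by simp
        also have "\<dots> \<le> e^2"
          using N kN mN l2_norm_nonneg[OF Fd[of k m]] by (intro power_mono) (auto intro: less_imp_le)
        finally show "(\<Sum>n<M. (hnorm V (hdiff V (F k n) (F m n)))^2) \<le> e^2" .
      qed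
      ultimately have "(\<Sum>n<M. (hnorm V (hdiff V (F k n) (L0 n)))^2) \<le> e^2"
        by (rule tendsto_le[OF trivial_limit_sequentially tendsto_const])
      then show ?thesis unfolding h_def by simp
    qed
    have s: "summable (\<lambda>n. (hnorm V (h k n))^2)"
    proof (rule bounded_imp_summable)
      show "0 \<le> (hnorm V (h k n))^2" for n by simp
      show "(\<Sum>j\<le>n. (hnorm V (h k j))^2) \<le> e^2" for n
        using ps[of "Suc n"] by (simp add: lessThan_Suc_atMost)
    qed
    then show ?thesis using ps by (simp add: suminf_le_const)
  qed
  obtain N1 where N1: "\<forall>m\<ge>N1. \<forall>n\<ge>N1. hnorm ?L (hdiff ?L (F m) (F n)) < 1" using cauchy by force
  have hN1: "h N1 \<in> hcarrier ?L" unfolding l2_carrier using hC bound[OF N1 order_refl] by simp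
  have L0eq: "L0 = hdiff ?L (F N1) (h N1)"
    unfolding h_def l2_hdiff using FC L0C by (intro ext ext_eq) auto
  have L0in: "L0 \<in> hcarrier ?L" unfolding L0eq using F hN1 by (intro l2_diff_in)
  show ?thesis
  proof (intro bexI[OF _ L0in] LIMSEQ_I)
    fix r :: real assume r: "r > 0"
    obtain N where N: "\<forall>m\<ge>N. \<forall>n\<ge>N. hnorm ?L (hdiff ?L (F m) (F n)) < r / 2"
      using cauchy r by (meson half_gt_zero)
    show "\<exists>N. \<forall>k\<ge>N. norm (hnorm ?L (hdiff ?L (F k) L0) - 0) < r"
    proof (intro exI allI impI)
      fix k assume kN: "N \<le> k"
      have b: "summable (\<lambda>n. (hnorm V (h k n))^2)" "(\<Sum>n. (hnorm V (h k n))^2) \<le> (r/2)^2"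
        using bound[OF N kN] r by auto
      have hk: "h k \<in> hcarrier ?L" unfolding l2_carrier using hC b by simp
      have "(hnorm ?L (h k))^2 \<le> (r/2)^2" using l2_norm_sq[OF hk] b by simp
      moreover have "0 \<le> r/2" using r by simp
      ultimately have "hnorm ?L (h k) \<le> r/2" by (rule power2_le_imp_le)
      moreover have "hnorm ?L (h k) \<ge> 0" using l2_norm_nonneg[OF hk] .
      ultimately show "norm (hnorm ?L (hdiff ?L (F k) L0) - 0) < r" unfolding h_def using r by simp
    qed
  qed
qed

lemma l2_hilbert: "complex_hilbert_space (l2space V)"
proof -
  let ?L = "l2space V"
  have C: "\<And>f n. f \<in> hcarrier ?L \<Longrightarrow> f n \<in> hcarrier V" unfolding l2_carrier by auto
  show ?thesis
    unfolding complex_hilbert_space_def Let_def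
  proof (intro conjI ballI allI impI)
    show "hzero ?L \<in> hcarrier ?L" by (rule l2_zero_in)
    show "hadd ?L x y \<in> hcarrier ?L" if "x \<in> hcarrier ?L" "y \<in> hcarrier ?L" for x y using that by (rule l2_add_in)
    show "hscale ?L a x \<in> hcarrier ?L" if "x \<in> hcarrier ?L" for a x using that by (rule l2_scale_in)
    show "hadd ?L (hadd ?L x y) z = hadd ?L x (hadd ?L y z)" if "x \<in> hcarrier ?L" "y \<in> hcarrier ?L" "z \<in> hcarrier ?L" for x y z
      using that C ax(4) by auto
    show "hadd ?L x y = hadd ?L y x" if "x \<in> hcarrier ?L" "y \<in> hcarrier ?L" for x y
      using that C ax(5) by auto
    show "hadd ?L (hzero ?L) x = x" if "x \<in> hcarrier ?L" for x
      using that C by auto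
    show "hscale ?L 0 x = hzero ?L" if "x \<in> hcarrier ?L" for x
      using that C ax(7) by auto
    show "hscale ?L 1 x = x" if "x \<in> hcarrier ?L" for x
      using that C ax(8) by auto
    show "hscale ?L a (hscale ?L b x) = hscale ?L (a * b) x" if "x \<in> hcarrier ?L" for a b x
      using that C ax(9) by auto
    show "hscale ?L (a + b) x = hadd ?L (hscale ?L a x) (hscale ?L b x)" if "x \<in> hcarrier ?L" for a b x
      using that C ax(10) by auto
    show "hscale ?L a (hadd ?L x y) = hadd ?L (hscale ?L a x) (hscale ?L a y)" if "x \<in> hcarrier ?L" "y \<in> hcarrier ?L" for a x y
      using that C ax(11) by auto
    show "hinner ?L x y = cnj (hinner ?L y x)" if x: "x \<in> hcarrier ?L" and y: "y \<in> hcarrier ?L" for x y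
    proof -
      have "(\<lambda>n. hinner V (x n) (y n)) = (\<lambda>n. cnj (hinner V (y n) (x n)))"
        using x y C by (intro ext inner_commute) auto
      moreover have "(\<lambda>n. cnj (hinner V (y n) (x n))) sums cnj (\<Sum>n. hinner V (y n) (x n))"
        using summable_sums[OF l2_summable_inner[OF y x]] by (simp add: sums_cnj)
      ultimately show ?thesis by (simp add: sums_iff)
    qed
    show "hinner ?L x (hadd ?L y z) = hinner ?L x y + hinner ?L x z"
      if x: "x \<in> hcarrier ?L" and y: "y \<in> hcarrier ?L" and z: "z \<in> hcarrier ?L" for x y z
      using x y z C l2_summable_inner[OF x y] l2_summable_inner[OF x z] by (simp add: suminf_add)
    show "hinner ?L x (hscale ?L a y) = a * hinner ?L x y"
      if x: "x \<in> hcarrier ?L" and y: "y \<in> hcarrier ?L" for a x y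
      using x y C l2_summable_inner[OF x y] by (simp add: suminf_mult)
    show "Im (hinner ?L x x) = 0" if x: "x \<in> hcarrier ?L" for x
      using l2_inner_self[OF x] by simp
    show "0 \<le> Re (hinner ?L x x)" if x: "x \<in> hcarrier ?L" for x
      using l2_inner_self[OF x] x unfolding l2_carrier by (simp add: suminf_nonneg)
    show "x = hzero ?L" if x: "x \<in> hcarrier ?L" and x0: "hinner ?L x x = 0" for x
    proof -
      have s: "summable (\<lambda>n. (hnorm V (x n))^2)" using x unfolding l2_carrier by auto
      have "(\<Sum>n. (hnorm V (x n))^2) = 0" using l2_inner_self[OF x] x0 by simp
      then have "\<forall>n. (hnorm V (x n))^2 = 0" using suminf_eq_zero_iff[OF s] by simp
      then show ?thesis using norm_zero_iff C x by (auto intro!: ext)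
    qed
    show "\<exists>l\<in>hcarrier ?L. (\<lambda>n. hnorm ?L (hdiff ?L (f n) l)) \<longlonglongrightarrow> 0"
      if "(\<forall>n. f n \<in> hcarrier ?L) \<and> (\<forall>e>0. \<exists>N. \<forall>m\<ge>N. \<forall>n\<ge>N. hnorm ?L (hdiff ?L (f m) (f n)) < e)" for f
      using that l2_complete by blast
  qed
qed

end

lemma subspace_hilbert:
  assumes X: "complex_hilbert_space X"
    and S: "S \<subseteq> hcarrier X" "hzero X \<in> S"
    and Sadd: "\<And>x y. x \<in> S \<Longrightarrow> y \<in> S \<Longrightarrow> hadd X x y \<in> S"
    and Sscl: "\<And>a x. x \<in> S \<Longrightarrow> hscale X a x \<in> S"
    and closed: "\<And>f l. (\<forall>n. f n \<in> S) \<Longrightarrow> l \<in> hcarrier X \<Longrightarrow> (\<lambda>n. hnorm X (hdiff X (f n) l)) \<longlonglongrightarrow> 0 \<Longrightarrow> l \<in> S"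
  shows "complex_hilbert_space (X\<lparr>hcarrier := S\<rparr>)"
proof -
  interpret hs X using X by (rule hs.intro)
  have hn: "hnorm (X\<lparr>hcarrier := S\<rparr>) = hnorm X" by (simp add: hnorm_def fun_eq_iff)
  have hd: "hdiff (X\<lparr>hcarrier := S\<rparr>) = hdiff X" by (simp add: hdiff_def fun_eq_iff)
  have SC: "x \<in> S \<Longrightarrow> x \<in> hcarrier X" for x using S by auto
  have rs: "hcarrier (X\<lparr>hcarrier := S\<rparr>) = S" "hzero (X\<lparr>hcarrier := S\<rparr>) = hzero X"
    "hadd (X\<lparr>hcarrier := S\<rparr>) = hadd X" "hscale (X\<lparr>hcarrier := S\<rparr>) = hscale X"
    "hinner (X\<lparr>hcarrier := S\<rparr>) = hinner X" by simp_all
  show ?thesis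
    unfolding complex_hilbert_space_def Let_def hn hd rs
  proof (intro conjI ballI allI impI)
    show "hzero X \<in> S" by (rule S(2))
    show "hadd X x y \<in> S" if "x \<in> S" "y \<in> S" for x y using that Sadd by blast
    show "hscale X a x \<in> S" if "x \<in> S" for a x using that Sscl by blast
    show "hadd X (hadd X x y) z = hadd X x (hadd X y z)" if "x \<in> S" "y \<in> S" "z \<in> S" for x y z using that SC ax(4) by blast
    show "hadd X x y = hadd X y x" if "x \<in> S" "y \<in> S" for x y using that SC ax(5) by blast
    show "hadd X (hzero X) x = x" if "x \<in> S" for x using that SC ax(6) by blast
    show "hscale X 0 x = hzero X" if "x \<in> S" for x using that SC ax(7) by blast
    show "hscale X 1 x = x" if "x \<in> S" for x using that SC ax(8) by blast
    show "hscale X a (hscale X b x) = hscale X (a * b) x" if "x \<in> S" for a b x using that SC ax(9) by blast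
    show "hscale X (a + b) x = hadd X (hscale X a x) (hscale X b x)" if "x \<in> S" for a b x using that SC ax(10) by blast
    show "hscale X a (hadd X x y) = hadd X (hscale X a x) (hscale X a y)" if "x \<in> S" "y \<in> S" for a x y using that SC ax(11) by blast
    show "hinner X x y = cnj (hinner X y x)" if "x \<in> S" "y \<in> S" for x y using that SC ax(12) by blast
    show "hinner X x (hadd X y z) = hinner X x y + hinner X x z" if "x \<in> S" "y \<in> S" "z \<in> S" for x y z using that SC ax(13) by blast
    show "hinner X x (hscale X a y) = a * hinner X x y" if "x \<in> S" "y \<in> S" for a x y using that SC ax(14) by blast
    show "Im (hinner X x x) = 0" if "x \<in> S" for x using that SC ax(15) by blast
    show "0 \<le> Re (hinner X x x)" if "x \<in> S" for x using that SC ax(15) by blast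
    show "x = hzero X" if "x \<in> S" "hinner X x x = 0" for x using that SC ax(16) by blast
    show "\<exists>l\<in>S. (\<lambda>n. hnorm X (hdiff X (f n) l)) \<longlonglongrightarrow> 0"
      if hf: "(\<forall>n. f n \<in> S) \<and> (\<forall>e>0. \<exists>N. \<forall>m\<ge>N. \<forall>n\<ge>N. hnorm X (hdiff X (f m) (f n)) < e)" for f
    proof -
      obtain l where "l \<in> hcarrier X" "(\<lambda>n. hnorm X (hdiff X (f n) l)) \<longlonglongrightarrow> 0"
        using hf SC ax(17)[of f] by blast
      then show ?thesis using hf closed by blast
    qed
  qed
qed

definition mk :: "'v \<Rightarrow> (nat \<Rightarrow> 'v) \<Rightarrow> (nat \<Rightarrow> 'v) \<Rightarrow> nat \<Rightarrow> 'v" where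
  "mk h a b n = (if n = 0 then h else if odd n then a ((n - 1) div 2) else b ((n - 2) div 2))"

definition sa :: "(nat \<Rightarrow> 'v) \<Rightarrow> nat \<Rightarrow> 'v" where "sa f k = f (2 * k + 1)"
definition sb :: "(nat \<Rightarrow> 'v) \<Rightarrow> nat \<Rightarrow> 'v" where "sb f k = f (2 * k + 2)"

lemma mk_0 [simp]: "mk h a b 0 = h" by (simp add: mk_def)
lemma sa_mk [simp]: "sa (mk h a b) = a" by (simp add: mk_def sa_def fun_eq_iff)
lemma sb_mk [simp]: "sb (mk h a b) = b" by (simp add: mk_def sb_def fun_eq_iff)
lemma nat_parity_cases:
  fixes n :: nat
  obtains "n = 0" | k where "n = 2 * k + 1" | k where "n = 2 * k + 2"
proof (cases "odd n")
  case True
  then obtain k where "n = 2 * k + 1" by (auto elim!: oddE)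
  then show ?thesis using that by blast
next
  case False
  then obtain m where m: "n = 2 * m" by (auto elim!: evenE)
  show ?thesis
  proof (cases m)
    case 0 then show ?thesis using that m by simp
  next
    case (Suc j) then have "n = 2 * j + 2" using m by simp
    then show ?thesis using that by blast
  qed
qed

lemma mk_eta: "mk (f 0) (sa f) (sb f) = f"
proof
  fix n
  show "mk (f 0) (sa f) (sb f) n = f n"
    by (cases n rule: nat_parity_cases) (simp_all add: mk_def sa_def sb_def)
qed

lemma mk_eq_iff: "mk h a b = mk h' a' b' \<longleftrightarrow> h = h' \<and> a = a' \<and> b = b'"
proof
  assume "mk h a b = mk h' a' b'"
  then have "mk h a b 0 = mk h' a' b' 0" "sa (mk h a b) = sa (mk h' a' b')" "sb (mk h a b) = sb (mk h' a' b')"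
    by simp_all
  then show "h = h' \<and> a = a' \<and> b = b'" by simp
qed simp

lemma split_sums:
  fixes c :: "nat \<Rightarrow> 'b::real_normed_vector"
  assumes s1: "summable (\<lambda>k. c (2 * k + 1))" and s2: "summable (\<lambda>k. c (2 * k + 2))"
  shows "c sums (c 0 + (\<Sum>k. c (2 * k + 1)) + (\<Sum>k. c (2 * k + 2)))"
proof -
  define d0 where "d0 n = (if n = 0 then c 0 else 0)" for n :: nat
  define d1 where "d1 n = (if odd n then c n else 0)" for n
  define d2 where "d2 n = (if even n \<and> n \<noteq> 0 then c n else 0)" for n
  have c: "c = (\<lambda>n. d0 n + d1 n + d2 n)"
    by (auto simp: fun_eq_iff d0_def d1_def d2_def)
  have "d0 = (\<lambda>r. if r = 0 then c r else 0)" unfolding d0_def by auto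
  then have "d0 sums c 0" using sums_single[of 0 c] by simp
  moreover have "d1 sums (\<Sum>k. c (2 * k + 1))"
  proof -
    have "(\<lambda>k. d1 (2 * k + 1)) sums (\<Sum>k. c (2 * k + 1))"
      unfolding d1_def using summable_sums[OF s1] by simp
    moreover have "strict_mono (\<lambda>k::nat. 2 * k + 1)" by (simp add: strict_mono_def)
    moreover have "n \<notin> range (\<lambda>k. 2 * k + 1) \<Longrightarrow> d1 n = 0" for n :: nat
      unfolding d1_def by (auto elim!: oddE)
    ultimately show ?thesis using sums_mono_reindex[of "\<lambda>k. 2 * k + 1" d1] by blast
  qed
  moreover have "d2 sums (\<Sum>k. c (2 * k + 2))"
  proof -
    have "(\<lambda>k. d2 (2 * k + 2)) sums (\<Sum>k. c (2 * k + 2))"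
      unfolding d2_def using summable_sums[OF s2] by simp
    moreover have "strict_mono (\<lambda>k::nat. 2 * k + 2)" by (simp add: strict_mono_def)
    moreover have "n \<notin> range (\<lambda>k. 2 * k + 2) \<Longrightarrow> d2 n = 0" for n :: nat
    proof -
      assume n: "n \<notin> range (\<lambda>k. 2 * k + 2)"
      show "d2 n = 0"
      proof (cases "even n \<and> n \<noteq> 0")
        case True
        then obtain k where "n = 2 * k" by (auto elim!: evenE)
        with True obtain j where "k = Suc j" by (metis mult_0_right not0_implies_Suc)
        with \<open>n = 2 * k\<close> have "n = 2 * j + 2" by simp
        with n show ?thesis by auto
      qed (auto simp: d2_def)
    qed
    ultimately show ?thesis using sums_mono_reindex[of "\<lambda>k. 2 * k + 2" d2] by blast
  qed
  ultimately show ?thesis unfolding c by (intro sums_add)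
qed

lemma summable_sub_nonneg:
  fixes c :: "nat \<Rightarrow> real" and g :: "nat \<Rightarrow> nat"
  assumes nn: "\<And>n. c n \<ge> 0" and s: "summable c" and g: "strict_mono g"
  shows "summable (\<lambda>k. c (g k))"
proof -
  define e where "e n = (if n \<in> range g then c n else 0)" for n
  have "summable e"
    by (rule summable_comparison_test'[OF s, of 0]) (auto simp: e_def nn)
  moreover have "n \<notin> range g \<Longrightarrow> e n = 0" for n by (simp add: e_def)
  ultimately have "summable (\<lambda>k. e (g k))" using summable_mono_reindex[OF g, of e] by blast
  then show ?thesis by (simp add: e_def)
qed

lemma split_summable_nonneg:
  fixes c :: "nat \<Rightarrow> real"
  assumes nn: "\<And>n. c n \<ge> 0" and s: "summable c"
  shows "summable (\<lambda>k. c (2 * k + 1))" "summable (\<lambda>k. c (2 * k + 2))"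
  using summable_sub_nonneg[OF nn s, of "\<lambda>k. 2 * k + 1"] summable_sub_nonneg[OF nn s, of "\<lambda>k. 2 * k + 2"]
  by (simp_all add: strict_mono_def)

lemma mk_odd [simp]: "mk h a b (Suc (2 * k)) = a k" by (simp add: mk_def)
lemma mk_even [simp]: "mk h a b (Suc (Suc (2 * k))) = b k" by (simp add: mk_def)

context hs
begin

lemma bop_simps:
  assumes T: "bounded_op V T"
  shows "x \<in> hcarrier V \<Longrightarrow> T x \<in> hcarrier V"
    and "x \<in> hcarrier V \<Longrightarrow> y \<in> hcarrier V \<Longrightarrow> T (hadd V x y) = hadd V (T x) (T y)"
    and "x \<in> hcarrier V \<Longrightarrow> T (hscale V a x) = hscale V a (T x)"
    and "x \<in> hcarrier V \<Longrightarrow> y \<in> hcarrier V \<Longrightarrow> T (hdiff V x y) = hdiff V (T x) (T y)"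
    and "T (hzero V) = hzero V"
proof -
  note b = bounded_opD[OF T]
  show "x \<in> hcarrier V \<Longrightarrow> T x \<in> hcarrier V" using b(1) .
  show "x \<in> hcarrier V \<Longrightarrow> y \<in> hcarrier V \<Longrightarrow> T (hadd V x y) = hadd V (T x) (T y)" using b(2) .
  show "x \<in> hcarrier V \<Longrightarrow> T (hscale V a x) = hscale V a (T x)" using b(3) .
  show "x \<in> hcarrier V \<Longrightarrow> y \<in> hcarrier V \<Longrightarrow> T (hdiff V x y) = hdiff V (T x) (T y)"
    using b(1,2,3) by (simp add: hdiff_def)
  have "T (hscale V 0 (hzero V)) = hscale V 0 (T (hzero V))" by (rule b(3)) simp
  moreover have "hscale V 0 (T (hzero V)) = hzero V" using b(1) ax(7) by simp
  moreover have "hscale V 0 (hzero V) = hzero V" by simp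
  ultimately show "T (hzero V) = hzero V" by simp
qed

lemma bop_cont:
  assumes T: "bounded_op V T" and f: "\<And>n. f n \<in> hcarrier V" and l: "l \<in> hcarrier V"
    and lim: "(\<lambda>n. hnorm V (hdiff V (f n) l)) \<longlonglongrightarrow> 0"
    and z: "\<And>n. T (f n) = hzero V"
  shows "T l = hzero V"
proof -
  obtain c where c: "c > 0" "\<And>x. x \<in> hcarrier V \<Longrightarrow> hnorm V (T x) \<le> c * hnorm V x"
    using bounded_opD(4)[OF T] by blast
  have "hnorm V (T l) \<le> c * hnorm V (hdiff V (f n) l)" for n
  proof -
    have "T (hdiff V (f n) l) = hdiff V (hzero V) (T l)" using bop_simps[OF T] f l z by simp
    then have "hnorm V (hdiff V (hzero V) (T l)) \<le> c * hnorm V (hdiff V (f n) l)"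
      using c(2)[of "hdiff V (f n) l"] f l by simp
    moreover have "hnorm V (hdiff V (hzero V) (T l)) = hnorm V (T l)"
    proof -
      have "hdiff V (hzero V) (T l) = hscale V (-1) (T l)" using bop_simps(1)[OF T l]
        by (intro ext_eq) auto
      then show ?thesis using norm_scale bop_simps(1)[OF T l] by simp
    qed
    ultimately show ?thesis by simp
  qed
  moreover have "(\<lambda>n. c * hnorm V (hdiff V (f n) l)) \<longlonglongrightarrow> 0"
    using tendsto_mult_right_zero[OF lim] by simp
  ultimately have "hnorm V (T l) \<le> 0"
    by (intro tendsto_lowerbound[OF _ _ trivial_limit_sequentially]) auto
  then have "hnorm V (T l) = 0" using norm_nonneg bop_simps(1)[OF T l] by (meson order_antisym)
  then show ?thesis using norm_zero_iff bop_simps(1)[OF T l] by blast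
qed

end

locale dil = hs H for H :: "'a chspace" +
  fixes W1 W2 Q :: "'a \<Rightarrow> 'a" and q :: complex
  assumes co1: "coisometry H W1" and co2: "coisometry H W2" and uQ: "unitary_op H Q"
    and rel: "\<forall>h\<in>hcarrier H. W2 (W1 h) = W1 (W2 (Q h))" and q1: "cmod q = 1"
begin

abbreviation "V1 \<equiv> hadjoint H W1"
abbreviation "V2 \<equiv> hadjoint H W2"
abbreviation "Qs \<equiv> hadjoint H Q"
abbreviation "C \<equiv> hcarrier H"

lemma W1b: "bounded_op H W1" using co1 unfolding coisometry_def by blast
lemma W2b: "bounded_op H W2" using co2 unfolding coisometry_def by blast
lemma Qbd: "bounded_op H Q" using uQ unfolding unitary_op_def by blast
lemma adj1: "is_adjoint H W1 V1" by (rule hadjoint_is_adjoint[OF W1b])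
lemma adj2: "is_adjoint H W2 V2" by (rule hadjoint_is_adjoint[OF W2b])
lemma adjQ: "is_adjoint H Q Qs" by (rule hadjoint_is_adjoint[OF Qbd])
lemma V1b: "bounded_op H V1" using adj1 unfolding is_adjoint_def by blast
lemma V2b: "bounded_op H V2" using adj2 unfolding is_adjoint_def by blast
lemma Qsb: "bounded_op H Qs" using adjQ unfolding is_adjoint_def by blast

lemmas ops [simp] = bop_simps[OF W1b] bop_simps[OF W2b] bop_simps[OF Qbd]
  bop_simps[OF V1b] bop_simps[OF V2b] bop_simps[OF Qsb]

lemma W1V1 [simp]: "x \<in> C \<Longrightarrow> W1 (V1 x) = x" using co1 unfolding coisometry_def by blast
lemma W2V2 [simp]: "x \<in> C \<Longrightarrow> W2 (V2 x) = x" using co2 unfolding coisometry_def by blast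
lemma QQs [simp]: "x \<in> C \<Longrightarrow> Q (Qs x) = x" using uQ unfolding unitary_op_def by blast
lemma QsQ [simp]: "x \<in> C \<Longrightarrow> Qs (Q x) = x" using uQ unfolding unitary_op_def by blast

lemma adjW1: "x \<in> C \<Longrightarrow> y \<in> C \<Longrightarrow> hinner H x (V1 y) = hinner H (W1 x) y"
  using adj1 unfolding is_adjoint_def by simp
lemma adjW2: "x \<in> C \<Longrightarrow> y \<in> C \<Longrightarrow> hinner H x (V2 y) = hinner H (W2 x) y"
  using adj2 unfolding is_adjoint_def by simp
lemma adjQ1: "x \<in> C \<Longrightarrow> y \<in> C \<Longrightarrow> hinner H (Q x) y = hinner H x (Qs y)"
  using adjQ unfolding is_adjoint_def by simp
lemma adjQ2: "x \<in> C \<Longrightarrow> y \<in> C \<Longrightarrow> hinner H x (Q y) = hinner H (Qs x) y"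
proof -
  assume x: "x \<in> C" and y: "y \<in> C"
  have "hinner H x (Q y) = cnj (hinner H (Q y) x)" using inner_commute[of x "Q y"] x y by simp
  also have "\<dots> = cnj (hinner H y (Qs x))" using adjQ1 x y by simp
  also have "\<dots> = hinner H (Qs x) y" using inner_commute[of "Qs x" y] x y by simp
  finally show ?thesis .
qed
lemma adjV1l: "x \<in> C \<Longrightarrow> y \<in> C \<Longrightarrow> hinner H (V1 x) y = hinner H x (W1 y)"
proof -
  assume x: "x \<in> C" and y: "y \<in> C"
  have "hinner H (V1 x) y = cnj (hinner H y (V1 x))" using inner_commute[of "V1 x" y] x y by simp
  also have "\<dots> = cnj (hinner H (W1 y) x)" using adjW1 x y by simp
  also have "\<dots> = hinner H x (W1 y)" using inner_commute[of x "W1 y"] x y by simp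
  finally show ?thesis .
qed
lemma adjV2l: "x \<in> C \<Longrightarrow> y \<in> C \<Longrightarrow> hinner H (V2 x) y = hinner H x (W2 y)"
proof -
  assume x: "x \<in> C" and y: "y \<in> C"
  have "hinner H (V2 x) y = cnj (hinner H y (V2 x))" using inner_commute[of "V2 x" y] x y by simp
  also have "\<dots> = cnj (hinner H (W2 y) x)" using adjW2 x y by simp
  also have "\<dots> = hinner H x (W2 y)" using inner_commute[of x "W2 y"] x y by simp
  finally show ?thesis .
qed

lemma isoV1 [simp]: "x \<in> C \<Longrightarrow> y \<in> C \<Longrightarrow> hinner H (V1 x) (V1 y) = hinner H x y"
  using adjV1l by simp
lemma isoV2 [simp]: "x \<in> C \<Longrightarrow> y \<in> C \<Longrightarrow> hinner H (V2 x) (V2 y) = hinner H x y"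
  using adjV2l by simp
lemma isoQ [simp]: "x \<in> C \<Longrightarrow> y \<in> C \<Longrightarrow> hinner H (Q x) (Q y) = hinner H x y"
  using adjQ1 by simp
lemma isoQs [simp]: "x \<in> C \<Longrightarrow> y \<in> C \<Longrightarrow> hinner H (Qs x) (Qs y) = hinner H x y"
  using adjQ2[of x "Qs y"] by simp

lemma rel' [simp]: "x \<in> C \<Longrightarrow> W2 (W1 x) = W1 (W2 (Q x))" using rel by blast

lemma relV [simp]: "x \<in> C \<Longrightarrow> V2 (V1 x) = Q (V1 (V2 x))"
proof (rule ext_eq)
  fix z assume x: "x \<in> C" and z: "z \<in> C"
  have "hinner H z (V2 (V1 x)) = hinner H (W1 (W2 z)) x" using adjW2 adjW1 x z by simp
  also have "\<dots> = hinner H (W2 (W1 (Qs z))) x" using z by simp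
  also have "\<dots> = hinner H z (Q (V1 (V2 x)))" using adjW2 adjW1 adjQ2 x z by simp
  finally show "hinner H z (V2 (V1 x)) = hinner H z (Q (V1 (V2 x)))" .
qed auto

lemma qq [simp]: "cnj q * q = 1" "q * cnj q = 1"
  using q1 complex_norm_square[of q] by (simp_all add: mult.commute)
lemma qqk [simp]: "cnj q ^ k * q ^ k = 1" "q ^ k * cnj q ^ k = 1"
  by (simp_all add: power_mult_distrib[symmetric] mult.commute)
lemma qqk2 [simp]: "cnj q ^ k * (q ^ k * x) = x" "q ^ k * (cnj q ^ k * x) = x"
  by (simp_all add: mult.assoc[symmetric])
lemma cmod_qk [simp]: "cmod (q ^ k) = 1" "cmod (cnj q ^ k) = 1"
  using q1 by (simp_all add: norm_power)

definition Kc :: "(nat \<Rightarrow> 'a) set" where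
  "Kc = {f \<in> hcarrier (l2space H). \<forall>k. W1 (sa f k) = hzero H \<and> W2 (sb f k) = hzero H}"

definition K :: "(nat \<Rightarrow> 'a) chspace" where
  "K = (l2space H)\<lparr>hcarrier := Kc\<rparr>"

lemma K_simps [simp]: "hcarrier K = Kc" "hadd K = hadd (l2space H)" "hscale K = hscale (l2space H)"
  "hzero K = hzero (l2space H)" "hinner K = hinner (l2space H)"
  by (simp_all add: K_def)

lemma K_hilbert: "complex_hilbert_space K"
  unfolding K_def
proof (rule subspace_hilbert[OF l2_hilbert])
  show "Kc \<subseteq> hcarrier (l2space H)" unfolding Kc_def by auto
  show "hzero (l2space H) \<in> Kc" unfolding Kc_def using l2_zero_in by (simp add: sa_def sb_def)
  show "hadd (l2space H) x y \<in> Kc" if "x \<in> Kc" "y \<in> Kc" for x y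
    using that l2_add_in unfolding Kc_def l2_carrier by (auto simp: sa_def sb_def)
  show "hscale (l2space H) a x \<in> Kc" if "x \<in> Kc" for a x
    using that l2_scale_in unfolding Kc_def l2_carrier by (auto simp: sa_def sb_def)
  show "l \<in> Kc" if f: "\<forall>n. f n \<in> Kc" and l: "l \<in> hcarrier (l2space H)"
    and lim: "(\<lambda>n. hnorm (l2space H) (hdiff (l2space H) (f n) l)) \<longlonglongrightarrow> 0" for f l
  proof -
    have fL: "f n \<in> hcarrier (l2space H)" for n using f unfolding Kc_def by auto
    have fC: "f n m \<in> C" for n m using fL unfolding l2_carrier by auto
    have lC: "l m \<in> C" for m using l unfolding l2_carrier by auto
    have comp: "(\<lambda>n. hnorm H (hdiff H (f n m) (l m))) \<longlonglongrightarrow> 0" for m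
    proof (rule tendsto_sandwich[OF _ _ tendsto_const lim])
      show "\<forall>\<^sub>F n in sequentially. 0 \<le> hnorm H (hdiff H (f n m) (l m))" using fC lC by simp
      show "\<forall>\<^sub>F n in sequentially. hnorm H (hdiff H (f n m) (l m)) \<le> hnorm (l2space H) (hdiff (l2space H) (f n) l)"
      proof (intro always_eventually allI)
        fix n
        show "hnorm H (hdiff H (f n m) (l m)) \<le> hnorm (l2space H) (hdiff (l2space H) (f n) l)"
          using l2_comp_le[OF l2_diff_in[OF fL[of n] l], of m] by simp
      qed
    qed
    have "W1 (sa l k) = hzero H" for k
      using bop_cont[OF W1b, of "\<lambda>n. f n (2 * k + 1)"] fC lC comp f unfolding Kc_def sa_def by simp
    moreover have "W2 (sb l k) = hzero H" for k
      using bop_cont[OF W2b, of "\<lambda>n. f n (2 * k + 2)"] fC lC comp f unfolding Kc_def sb_def by simp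
    ultimately show ?thesis unfolding Kc_def using l by simp
  qed
qed

lemma Kc_l2: "f \<in> Kc \<Longrightarrow> f \<in> hcarrier (l2space H)" unfolding Kc_def by simp

lemma mk_in_Kc:
  "mk h a b \<in> Kc \<longleftrightarrow> h \<in> C \<and> (\<forall>k. a k \<in> C \<and> W1 (a k) = hzero H) \<and> (\<forall>k. b k \<in> C \<and> W2 (b k) = hzero H)
     \<and> summable (\<lambda>k. (hnorm H (a k))^2) \<and> summable (\<lambda>k. (hnorm H (b k))^2)"
proof
  assume m: "mk h a b \<in> Kc"
  then have L: "\<forall>n. mk h a b n \<in> C" "summable (\<lambda>n. (hnorm H (mk h a b n))^2)"
    unfolding Kc_def l2_carrier by auto
  have "h \<in> C" using L(1)[rule_format, of 0] by simp
  moreover have "a k \<in> C" "b k \<in> C" for k using L(1)[rule_format, of "Suc (2*k)"] L(1)[rule_format, of "Suc (Suc (2*k))"] by simp_all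
  moreover have "W1 (a k) = hzero H" "W2 (b k) = hzero H" for k using m unfolding Kc_def by auto
  moreover have "summable (\<lambda>k. (hnorm H (a k))^2)" "summable (\<lambda>k. (hnorm H (b k))^2)"
    using split_summable_nonneg[of "\<lambda>n. (hnorm H (mk h a b n))^2", OF _ L(2)] by simp_all
  ultimately show "h \<in> C \<and> (\<forall>k. a k \<in> C \<and> W1 (a k) = hzero H) \<and> (\<forall>k. b k \<in> C \<and> W2 (b k) = hzero H)
     \<and> summable (\<lambda>k. (hnorm H (a k))^2) \<and> summable (\<lambda>k. (hnorm H (b k))^2)" by blast
next
  assume A: "h \<in> C \<and> (\<forall>k. a k \<in> C \<and> W1 (a k) = hzero H) \<and> (\<forall>k. b k \<in> C \<and> W2 (b k) = hzero H)
     \<and> summable (\<lambda>k. (hnorm H (a k))^2) \<and> summable (\<lambda>k. (hnorm H (b k))^2)"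
  have "mk h a b n \<in> C" for n using A by (cases n rule: nat_parity_cases) auto
  moreover have "summable (\<lambda>n. (hnorm H (mk h a b n))^2)"
    using split_sums[of "\<lambda>n. (hnorm H (mk h a b n))^2"] A by (auto simp: sums_iff)
  ultimately show "mk h a b \<in> Kc" unfolding Kc_def l2_carrier using A by simp
qed

lemma Kc_mk: "f \<in> Kc \<Longrightarrow> \<exists>h a b. f = mk h a b" using mk_eta by metis

lemma K_inner:
  assumes f: "mk h a b \<in> Kc" and g: "mk h' a' b' \<in> Kc"
  shows "hinner K (mk h a b) (mk h' a' b') = hinner H h h' + (\<Sum>k. hinner H (a k) (a' k)) + (\<Sum>k. hinner H (b k) (b' k))"
proof -
  have A: "summable (\<lambda>k. hinner H (a k) (a' k))" "summable (\<lambda>k. hinner H (b k) (b' k))"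
    using f g unfolding mk_in_Kc by (auto intro!: l2_summable_inner simp: l2_carrier)
  have "(\<lambda>n. hinner H (mk h a b n) (mk h' a' b' n)) sums (hinner H h h' + (\<Sum>k. hinner H (a k) (a' k)) + (\<Sum>k. hinner H (b k) (b' k)))"
    using split_sums[of "\<lambda>n. hinner H (mk h a b n) (mk h' a' b' n)"] A by simp
  then show ?thesis by (simp add: sums_iff)
qed

end

context hs
begin

lemma diff_self [simp]: "x \<in> hcarrier V \<Longrightarrow> hdiff V x x = hzero V"
  by (intro ext_eq) auto
lemma scale_scale [simp]: "x \<in> hcarrier V \<Longrightarrow> hscale V a (hscale V b x) = hscale V (a * b) x"
  by (rule ax(9))
lemma scale_one [simp]: "x \<in> hcarrier V \<Longrightarrow> hscale V 1 x = x"
  by (rule ax(8))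
lemma scale_zero_left [simp]: "x \<in> hcarrier V \<Longrightarrow> hscale V 0 x = hzero V"
  by (rule ax(7))

lemma seq_summable_inner:
  assumes "\<And>k. x k \<in> hcarrier V" "\<And>k. y k \<in> hcarrier V"
    "summable (\<lambda>k. (hnorm V (x k))^2)" "summable (\<lambda>k. (hnorm V (y k))^2)"
  shows "summable (\<lambda>k. hinner V (x k) (y k))"
  using l2_summable_inner[of x y] assms unfolding l2_carrier by auto

lemma norm_sq_le_of_inner:
  assumes x: "x \<in> hcarrier V" and u: "u \<in> hcarrier V" and v: "v \<in> hcarrier V"
    and e: "hinner V u u + hinner V v v = hinner V x x"
  shows "(hnorm V u)^2 \<le> (hnorm V x)^2" "(hnorm V v)^2 \<le> (hnorm V x)^2"
proof -
  have "Re (hinner V u u) + Re (hinner V v v) = Re (hinner V x x)" using arg_cong[OF e, of Re] by simp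
  then have "(hnorm V u)^2 + (hnorm V v)^2 = (hnorm V x)^2" using norm_sq x u v by simp
  moreover have "(hnorm V u)^2 \<ge> 0" "(hnorm V v)^2 \<ge> 0" by simp_all
  ultimately show "(hnorm V u)^2 \<le> (hnorm V x)^2" "(hnorm V v)^2 \<le> (hnorm V x)^2" by linarith+
qed

lemma norm_sq_eq_of_inner:
  assumes x: "x \<in> hcarrier V" and u: "u \<in> hcarrier V" and v: "v \<in> hcarrier V"
    and e: "hinner V x x = hinner V u u + hinner V v v"
  shows "(hnorm V x)^2 = (hnorm V u)^2 + (hnorm V v)^2"
proof -
  have "Re (hinner V x x) = Re (hinner V u u) + Re (hinner V v v)" using arg_cong[OF e, of Re] by simp
  then show ?thesis using norm_sq x u v by simp
qed

end

context dil
begin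

lemma qqS [simp]: "cnj q * cnj q ^ k * q * q ^ k = 1" "q * q ^ k * cnj q * cnj q ^ k = 1"
  "cnj q * cnj q ^ k * (q * q ^ k) = 1" "q * q ^ k * (cnj q * cnj q ^ k) = 1"
proof -
  have e: "cnj q * cnj q ^ k * q * q ^ k = (cnj q * q) * (cnj q ^ k * q ^ k)" by (simp only: ac_simps)
  have e2: "q * q ^ k * cnj q * cnj q ^ k = (q * cnj q) * (q ^ k * cnj q ^ k)" by (simp only: ac_simps)
  show "cnj q * cnj q ^ k * q * q ^ k = 1" using e by simp
  show "q * q ^ k * cnj q * cnj q ^ k = 1" using e2 by simp
  show "cnj q * cnj q ^ k * (q * q ^ k) = 1" using e by (simp add: mult.assoc)
  show "q * q ^ k * (cnj q * cnj q ^ k) = 1" using e2 by (simp add: mult.assoc)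
qed

abbreviation "P1 x \<equiv> hdiff H x (V1 (W1 x))"
abbreviation "P2 x \<equiv> hdiff H x (V2 (W2 x))"

lemma R1 [simp]: "x \<in> C \<Longrightarrow> W1 (W2 (Q x)) = W2 (W1 x)" using rel by simp
lemma R2 [simp]: "u \<in> C \<Longrightarrow> W2 (W1 (Qs u)) = W1 (W2 u)" using rel[rule_format, of "Qs u"] by simp

lemma PW1: "x \<in> C \<Longrightarrow> y \<in> C \<Longrightarrow> hinner H (P1 x) (P1 y) + hinner H (W1 x) (W1 y) = hinner H x y"
  by (simp add: adjW1 adjV1l)
lemma PW2: "x \<in> C \<Longrightarrow> y \<in> C \<Longrightarrow> hinner H (P2 x) (P2 y) + hinner H (W2 x) (W2 y) = hinner H x y"
  by (simp add: adjW2 adjV2l)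

lemma inner_bV2:
  assumes "b \<in> C" "b' \<in> C" "W2 b = hzero H" "W2 b' = hzero H" "al \<in> C" "al' \<in> C"
  shows "hinner H (hadd H (hscale H c b) (V2 al)) (hadd H (hscale H c' b') (V2 al'))
       = cnj c * c' * hinner H b b' + hinner H al al'"
  using assms by (simp add: adjW2 adjV2l algebra_simps)

lemma inner_bV1:
  assumes "a \<in> C" "a' \<in> C" "W1 a = hzero H" "W1 a' = hzero H" "b \<in> C" "b' \<in> C"
  shows "hinner H (hadd H a (V1 b)) (hadd H a' (V1 b')) = hinner H a a' + hinner H b b'"
  using assms by (simp add: adjW1 adjV1l algebra_simps)

definition al1 :: "(nat \<Rightarrow> 'a) \<Rightarrow> nat \<Rightarrow> 'a" where
  "al1 f k = (if k = 0 then P1 (f 0) else hscale H (cnj q ^ k) (sa f (k - 1)))"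
definition Y1 :: "(nat \<Rightarrow> 'a) \<Rightarrow> nat \<Rightarrow> 'a" where
  "Y1 f k = Qs (hadd H (hscale H (cnj q ^ k) (sb f k)) (V2 (al1 f k)))"
definition U1 :: "(nat \<Rightarrow> 'a) \<Rightarrow> nat \<Rightarrow> 'a" where
  "U1 f = mk (W1 (f 0)) (\<lambda>k. P1 (Y1 f k)) (\<lambda>k. W1 (Y1 f k))"
definition XX :: "(nat \<Rightarrow> 'a) \<Rightarrow> nat \<Rightarrow> 'a" where
  "XX g k = hadd H (sa g k) (V1 (sb g k))"
definition A1 :: "(nat \<Rightarrow> 'a) \<Rightarrow> nat \<Rightarrow> 'a" where
  "A1 g = mk (hadd H (V1 (g 0)) (W2 (Q (XX g 0)))) (\<lambda>k. hscale H (q ^ (k + 1)) (W2 (Q (XX g (k + 1)))))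
             (\<lambda>k. hscale H (q ^ k) (P2 (Q (XX g k))))"

lemma Kc_facts:
  assumes "mk h a b \<in> Kc"
  shows "h \<in> C" "\<And>k. a k \<in> C" "\<And>k. b k \<in> C" "\<And>k. W1 (a k) = hzero H" "\<And>k. W2 (b k) = hzero H"
    "summable (\<lambda>k. (hnorm H (a k))^2)" "summable (\<lambda>k. (hnorm H (b k))^2)"
  using assms unfolding mk_in_Kc by auto

lemma al1_mk: "al1 (mk h a b) 0 = P1 h" "al1 (mk h a b) (Suc k) = hscale H (cnj q ^ Suc k) (a k)"
  by (simp_all add: al1_def)

lemma al1_in: "mk h a b \<in> Kc \<Longrightarrow> al1 (mk h a b) k \<in> C"
  using Kc_facts[of h a b] by (cases k) (simp_all add: al1_mk)

lemma al1_W1: "mk h a b \<in> Kc \<Longrightarrow> W1 (al1 (mk h a b) k) = hzero H"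
  using Kc_facts[of h a b] by (cases k) (simp_all add: al1_mk)

lemma al1_summable:
  assumes f: "mk h a b \<in> Kc"
  shows "summable (\<lambda>k. (hnorm H (al1 (mk h a b) k))^2)"
proof -
  have "(\<lambda>k. (hnorm H (al1 (mk h a b) (Suc k)))^2) = (\<lambda>k. (hnorm H (a k))^2)"
    using Kc_facts[OF f] q1 by (simp add: al1_mk norm_scale norm_mult norm_power)
  then have "summable (\<lambda>k. (hnorm H (al1 (mk h a b) (Suc k)))^2)" using Kc_facts[OF f] by simp
  then show ?thesis by (rule summable_Suc_iff[THEN iffD1])
qed

lemma Y1_in: "mk h a b \<in> Kc \<Longrightarrow> Y1 (mk h a b) k \<in> C"
  using Kc_facts[of h a b] al1_in[of h a b k] by (simp add: Y1_def)

lemma Y1_inner: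
  assumes f: "mk h a b \<in> Kc" and g: "mk h' a' b' \<in> Kc"
  shows "hinner H (Y1 (mk h a b) k) (Y1 (mk h' a' b') k) = hinner H (b k) (b' k) + hinner H (al1 (mk h a b) k) (al1 (mk h' a' b') k)"
proof -
  have "hinner H (Y1 (mk h a b) k) (Y1 (mk h' a' b') k)
     = hinner H (hadd H (hscale H (cnj q ^ k) (b k)) (V2 (al1 (mk h a b) k))) (hadd H (hscale H (cnj q ^ k) (b' k)) (V2 (al1 (mk h' a' b') k)))"
    unfolding Y1_def using Kc_facts[OF f] Kc_facts[OF g] al1_in[OF f] al1_in[OF g] by simp
  also have "\<dots> = cnj (cnj q ^ k) * cnj q ^ k * hinner H (b k) (b' k) + hinner H (al1 (mk h a b) k) (al1 (mk h' a' b') k)"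
    by (rule inner_bV2) (use Kc_facts[OF f] Kc_facts[OF g] al1_in[OF f] al1_in[OF g] in auto)
  also have "\<dots> = hinner H (b k) (b' k) + hinner H (al1 (mk h a b) k) (al1 (mk h' a' b') k)"
    by simp
  finally show ?thesis .
qed

lemma U1_in:
  assumes f: "mk h a b \<in> Kc"
  shows "U1 (mk h a b) \<in> Kc"
proof -
  note F = Kc_facts[OF f]
  have Yin: "Y1 (mk h a b) k \<in> C" for k using Y1_in[OF f] .
  have W2Y: "W2 (W1 (Y1 (mk h a b) k)) = hzero H" for k
    unfolding Y1_def using F al1_in[OF f] al1_W1[OF f] by simp
  have nY: "(hnorm H (Y1 (mk h a b) k))^2 = (hnorm H (b k))^2 + (hnorm H (al1 (mk h a b) k))^2" for k
    by (rule norm_sq_eq_of_inner) (use Yin F al1_in[OF f] Y1_inner[OF f f] in auto)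
  have sY: "summable (\<lambda>k. (hnorm H (Y1 (mk h a b) k))^2)"
    unfolding nY using F al1_summable[OF f] by (intro summable_add)
  have b1: "(hnorm H (P1 (Y1 (mk h a b) k)))^2 \<le> (hnorm H (Y1 (mk h a b) k))^2"
   and b2: "(hnorm H (W1 (Y1 (mk h a b) k)))^2 \<le> (hnorm H (Y1 (mk h a b) k))^2" for k
    using norm_sq_le_of_inner[OF Yin, of "P1 (Y1 (mk h a b) k)" "W1 (Y1 (mk h a b) k)"] PW1 Yin by auto
  show ?thesis
    unfolding U1_def mk_in_Kc
  proof (intro conjI allI)
    show "W1 (mk h a b 0) \<in> C" using F by simp
    show "P1 (Y1 (mk h a b) k) \<in> C" for k using Yin by simp
    show "W1 (P1 (Y1 (mk h a b) k)) = hzero H" for k using Yin by simp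
    show "W1 (Y1 (mk h a b) k) \<in> C" for k using Yin by simp
    show "W2 (W1 (Y1 (mk h a b) k)) = hzero H" for k by (rule W2Y)
    show "summable (\<lambda>k. (hnorm H (P1 (Y1 (mk h a b) k)))^2)"
      by (rule summable_comparison_test'[OF sY, of 0]) (use b1 in simp)
    show "summable (\<lambda>k. (hnorm H (W1 (Y1 (mk h a b) k)))^2)"
      by (rule summable_comparison_test'[OF sY, of 0]) (use b2 in simp)
  qed
qed


lemma mk_add: "hadd (l2space H) (mk h a b) (mk h' a' b') = mk (hadd H h h') (\<lambda>k. hadd H (a k) (a' k)) (\<lambda>k. hadd H (b k) (b' k))"
  by (rule ext, case_tac x rule: nat_parity_cases) simp_all
lemma mk_scale: "hscale (l2space H) c (mk h a b) = mk (hscale H c h) (\<lambda>k. hscale H c (a k)) (\<lambda>k. hscale H c (b k))"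
  by (rule ext, case_tac x rule: nat_parity_cases) simp_all

lemma U1_mk: "U1 (mk h a b) = mk (W1 h) (\<lambda>k. P1 (Y1 (mk h a b) k)) (\<lambda>k. W1 (Y1 (mk h a b) k))"
  by (simp add: U1_def)

lemma U1_inner:
  assumes f: "mk h a b \<in> Kc" and g: "mk h' a' b' \<in> Kc"
  shows "hinner K (U1 (mk h a b)) (U1 (mk h' a' b')) = hinner K (mk h a b) (mk h' a' b')"
proof -
  let ?Y = "Y1 (mk h a b)" and ?Y' = "Y1 (mk h' a' b')"
  let ?al = "al1 (mk h a b)" and ?al' = "al1 (mk h' a' b')"
  note F = Kc_facts[OF f] and G = Kc_facts[OF g]
  have uf: "mk (W1 h) (\<lambda>k. P1 (?Y k)) (\<lambda>k. W1 (?Y k)) \<in> Kc" using U1_in[OF f] unfolding U1_mk .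
  have ug: "mk (W1 h') (\<lambda>k. P1 (?Y' k)) (\<lambda>k. W1 (?Y' k)) \<in> Kc" using U1_in[OF g] unfolding U1_mk .
  note UF = Kc_facts[OF uf] and UG = Kc_facts[OF ug]
  have s1: "summable (\<lambda>k. hinner H (P1 (?Y k)) (P1 (?Y' k)))"
    by (rule seq_summable_inner) (use UF UG in auto)
  have s2: "summable (\<lambda>k. hinner H (W1 (?Y k)) (W1 (?Y' k)))"
    by (rule seq_summable_inner) (use UF UG in auto)
  have sb: "summable (\<lambda>k. hinner H (b k) (b' k))"
    by (rule seq_summable_inner) (use F G in auto)
  have sa: "summable (\<lambda>k. hinner H (a k) (a' k))"
    by (rule seq_summable_inner) (use F G in auto)
  have sal: "summable (\<lambda>k. hinner H (?al k) (?al' k))"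
    by (rule seq_summable_inner) (use al1_in[OF f] al1_in[OF g] al1_summable[OF f] al1_summable[OF g] in auto)
  have e1: "hinner K (U1 (mk h a b)) (U1 (mk h' a' b'))
      = hinner H (W1 h) (W1 h') + (\<Sum>k. hinner H (P1 (?Y k)) (P1 (?Y' k))) + (\<Sum>k. hinner H (W1 (?Y k)) (W1 (?Y' k)))"
    unfolding U1_mk by (rule K_inner[OF uf ug])
  have e2: "(\<Sum>k. hinner H (P1 (?Y k)) (P1 (?Y' k))) + (\<Sum>k. hinner H (W1 (?Y k)) (W1 (?Y' k)))
      = (\<Sum>k. hinner H (b k) (b' k)) + (\<Sum>k. hinner H (?al k) (?al' k))"
  proof -
    have "(\<Sum>k. hinner H (P1 (?Y k)) (P1 (?Y' k))) + (\<Sum>k. hinner H (W1 (?Y k)) (W1 (?Y' k)))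
        = (\<Sum>k. hinner H (P1 (?Y k)) (P1 (?Y' k)) + hinner H (W1 (?Y k)) (W1 (?Y' k)))"
      using suminf_add[OF s1 s2] .
    also have "\<dots> = (\<Sum>k. hinner H (b k) (b' k) + hinner H (?al k) (?al' k))"
    proof -
      have "(\<lambda>k. hinner H (P1 (?Y k)) (P1 (?Y' k)) + hinner H (W1 (?Y k)) (W1 (?Y' k)))
          = (\<lambda>k. hinner H (b k) (b' k) + hinner H (?al k) (?al' k))"
      proof
        fix k
        have "hinner H (P1 (?Y k)) (P1 (?Y' k)) + hinner H (W1 (?Y k)) (W1 (?Y' k)) = hinner H (?Y k) (?Y' k)"
          by (rule PW1[OF Y1_in[OF f] Y1_in[OF g]])
        then show "hinner H (P1 (?Y k)) (P1 (?Y' k)) + hinner H (W1 (?Y k)) (W1 (?Y' k))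
          = hinner H (b k) (b' k) + hinner H (?al k) (?al' k)" using Y1_inner[OF f g] by simp
      qed
      then show ?thesis by (simp only:)
    qed
    also have "\<dots> = (\<Sum>k. hinner H (b k) (b' k)) + (\<Sum>k. hinner H (?al k) (?al' k))"
      using suminf_add[OF sb sal] by simp
    finally show ?thesis .
  qed
  have e3: "(\<Sum>k. hinner H (?al k) (?al' k)) = hinner H (P1 h) (P1 h') + (\<Sum>k. hinner H (a k) (a' k))"
  proof -
    have "(\<Sum>k. hinner H (?al (Suc k)) (?al' (Suc k))) = (\<Sum>k. hinner H (?al k) (?al' k)) - hinner H (?al 0) (?al' 0)"
      by (rule suminf_split_head[OF sal])
    moreover have "(\<lambda>k. hinner H (?al (Suc k)) (?al' (Suc k))) = (\<lambda>k. hinner H (a k) (a' k))"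
      using F G by (simp add: al1_mk mult.assoc[symmetric])
    ultimately show ?thesis by (simp add: al1_mk)
  qed
  have e4: "hinner H (W1 h) (W1 h') + hinner H (P1 h) (P1 h') = hinner H h h'"
    using PW1[OF F(1) G(1)] by (simp only: add.commute)
  have "hinner K (mk h a b) (mk h' a' b') = hinner H h h' + (\<Sum>k. hinner H (a k) (a' k)) + (\<Sum>k. hinner H (b k) (b' k))"
    by (rule K_inner[OF f g])
  then show ?thesis using e1 e2 e3 e4 by (simp add: algebra_simps)
qed

lemma Y1_add:
  assumes f: "mk h a b \<in> Kc" and g: "mk h' a' b' \<in> Kc"
  shows "Y1 (mk (hadd H h h') (\<lambda>k. hadd H (a k) (a' k)) (\<lambda>k. hadd H (b k) (b' k))) k
     = hadd H (Y1 (mk h a b) k) (Y1 (mk h' a' b') k)"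
  using Kc_facts[OF f] Kc_facts[OF g]
  by (cases k) (simp_all add: Y1_def al1_def ext_eq_iff algebra_simps)

lemma Y1_scale:
  assumes f: "mk h a b \<in> Kc"
  shows "Y1 (mk (hscale H c h) (\<lambda>k. hscale H c (a k)) (\<lambda>k. hscale H c (b k))) k
     = hscale H c (Y1 (mk h a b) k)"
  using Kc_facts[OF f]
  by (cases k) (simp_all add: Y1_def al1_def ext_eq_iff algebra_simps)

lemma P1_add [simp]: "x \<in> C \<Longrightarrow> y \<in> C \<Longrightarrow> P1 (hadd H x y) = hadd H (P1 x) (P1 y)"
  by (intro ext_eq) (simp_all add: algebra_simps)
lemma P2_add [simp]: "x \<in> C \<Longrightarrow> y \<in> C \<Longrightarrow> P2 (hadd H x y) = hadd H (P2 x) (P2 y)"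
  by (intro ext_eq) (simp_all add: algebra_simps)
lemma P1_scale [simp]: "x \<in> C \<Longrightarrow> P1 (hscale H c x) = hscale H c (P1 x)"
  by (intro ext_eq) (simp_all add: algebra_simps)
lemma P2_scale [simp]: "x \<in> C \<Longrightarrow> P2 (hscale H c x) = hscale H c (P2 x)"
  by (intro ext_eq) (simp_all add: algebra_simps)

lemma U1_add:
  assumes f: "mk h a b \<in> Kc" and g: "mk h' a' b' \<in> Kc"
  shows "U1 (hadd K (mk h a b) (mk h' a' b')) = hadd K (U1 (mk h a b)) (U1 (mk h' a' b'))"
proof -
  note F = Kc_facts[OF f] and G = Kc_facts[OF g]
  have "U1 (hadd K (mk h a b) (mk h' a' b')) = mk (W1 (hadd H h h'))
     (\<lambda>k. P1 (hadd H (Y1 (mk h a b) k) (Y1 (mk h' a' b') k))) (\<lambda>k. W1 (hadd H (Y1 (mk h a b) k) (Y1 (mk h' a' b') k)))"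
    unfolding K_simps mk_add U1_mk Y1_add[OF f g] ..
  also have "\<dots> = mk (hadd H (W1 h) (W1 h')) (\<lambda>k. hadd H (P1 (Y1 (mk h a b) k)) (P1 (Y1 (mk h' a' b') k)))
      (\<lambda>k. hadd H (W1 (Y1 (mk h a b) k)) (W1 (Y1 (mk h' a' b') k)))"
  proof -
    have c1: "P1 (hadd H (Y1 (mk h a b) k) (Y1 (mk h' a' b') k)) = hadd H (P1 (Y1 (mk h a b) k)) (P1 (Y1 (mk h' a' b') k))" for k
      by (rule P1_add[OF Y1_in[OF f] Y1_in[OF g]])
    have c2: "W1 (hadd H (Y1 (mk h a b) k) (Y1 (mk h' a' b') k)) = hadd H (W1 (Y1 (mk h a b) k)) (W1 (Y1 (mk h' a' b') k))" for k
      using Y1_in[OF f] Y1_in[OF g] by simp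
    have c3: "W1 (hadd H h h') = hadd H (W1 h) (W1 h')" using F G by simp
    show ?thesis by (simp only: c1) (simp only: c2 c3)
  qed
  also have "\<dots> = hadd K (U1 (mk h a b)) (U1 (mk h' a' b'))"
    unfolding K_simps mk_add U1_mk ..
  finally show ?thesis .
qed

lemma U1_scale:
  assumes f: "mk h a b \<in> Kc"
  shows "U1 (hscale K c (mk h a b)) = hscale K c (U1 (mk h a b))"
proof -
  note F = Kc_facts[OF f]
  have "U1 (hscale K c (mk h a b)) = mk (W1 (hscale H c h))
     (\<lambda>k. P1 (hscale H c (Y1 (mk h a b) k))) (\<lambda>k. W1 (hscale H c (Y1 (mk h a b) k)))"
    unfolding K_simps mk_scale U1_mk Y1_scale[OF f] ..
  also have "\<dots> = mk (hscale H c (W1 h)) (\<lambda>k. hscale H c (P1 (Y1 (mk h a b) k)))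
      (\<lambda>k. hscale H c (W1 (Y1 (mk h a b) k)))"
  proof -
    have c1: "P1 (hscale H c (Y1 (mk h a b) k)) = hscale H c (P1 (Y1 (mk h a b) k))" for k
      by (rule P1_scale[OF Y1_in[OF f]])
    have c2: "W1 (hscale H c (Y1 (mk h a b) k)) = hscale H c (W1 (Y1 (mk h a b) k))" for k
      using Y1_in[OF f] by simp
    have c3: "W1 (hscale H c h) = hscale H c (W1 h)" using F by simp
    show ?thesis by (simp only: c1) (simp only: c2 c3)
  qed
  also have "\<dots> = hscale K c (U1 (mk h a b))"
    unfolding K_simps mk_scale U1_mk ..
  finally show ?thesis .
qed

lemma A1_mk: "A1 (mk h a b) = mk (hadd H (V1 h) (W2 (Q (hadd H (a 0) (V1 (b 0))))))
   (\<lambda>k. hscale H (q ^ (k + 1)) (W2 (Q (hadd H (a (k+1)) (V1 (b (k+1)))))))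
   (\<lambda>k. hscale H (q ^ k) (P2 (Q (hadd H (a k) (V1 (b k))))))"
  by (simp add: A1_def XX_def)

lemma norm_XX:
  assumes f: "mk h a b \<in> Kc"
  shows "(hnorm H (hadd H (a k) (V1 (b k))))^2 = (hnorm H (a k))^2 + (hnorm H (b k))^2"
  using Kc_facts[OF f] inner_bV1 by (intro norm_sq_eq_of_inner) auto

lemma A1_in:
  assumes f: "mk h a b \<in> Kc"
  shows "A1 (mk h a b) \<in> Kc"
proof -
  note F = Kc_facts[OF f]
  let ?x = "\<lambda>k. hadd H (a k) (V1 (b k))"
  have xin: "?x k \<in> C" for k using F by simp
  have sx: "summable (\<lambda>k. (hnorm H (?x k))^2)" unfolding norm_XX[OF f] using F by (intro summable_add)
  have bW: "(hnorm H (W2 (Q (?x k))))^2 \<le> (hnorm H (?x k))^2"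
   and bP: "(hnorm H (P2 (Q (?x k))))^2 \<le> (hnorm H (?x k))^2" for k
  proof -
    have "(hnorm H (W2 (Q (?x k))))^2 \<le> (hnorm H (Q (?x k)))^2 \<and> (hnorm H (P2 (Q (?x k))))^2 \<le> (hnorm H (Q (?x k)))^2"
      using norm_sq_le_of_inner[of "Q (?x k)" "P2 (Q (?x k))" "W2 (Q (?x k))"] PW2 xin by auto
    moreover have "(hnorm H (Q (?x k)))^2 = (hnorm H (?x k))^2" using norm_sq xin by simp
    ultimately show "(hnorm H (W2 (Q (?x k))))^2 \<le> (hnorm H (?x k))^2" "(hnorm H (P2 (Q (?x k))))^2 \<le> (hnorm H (?x k))^2"
      by simp_all
  qed
  have sx1: "summable (\<lambda>k. (hnorm H (?x (k+1)))^2)" using summable_Suc_iff[THEN iffD2, OF sx] by simp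
  show ?thesis
    unfolding A1_mk mk_in_Kc
  proof (intro conjI allI)
    show "hadd H (V1 h) (W2 (Q (?x 0))) \<in> C" using F by simp
    show "hscale H (q ^ (k + 1)) (W2 (Q (?x (k+1)))) \<in> C" for k using F by simp
    show "W1 (hscale H (q ^ (k + 1)) (W2 (Q (?x (k+1))))) = hzero H" for k using F by simp
    show "hscale H (q ^ k) (P2 (Q (?x k))) \<in> C" for k using F by simp
    show "W2 (hscale H (q ^ k) (P2 (Q (?x k)))) = hzero H" for k using F by simp
    show "summable (\<lambda>k. (hnorm H (hscale H (q ^ (k + 1)) (W2 (Q (?x (k+1))))))^2)"
      by (rule summable_comparison_test'[OF sx1, of 0]) (use bW xin in \<open>simp add: norm_scale norm_power norm_mult q1\<close>)
    show "summable (\<lambda>k. (hnorm H (hscale H (q ^ k) (P2 (Q (?x k)))))^2)"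
      by (rule summable_comparison_test'[OF sx, of 0]) (use bP xin in \<open>simp add: norm_scale norm_power q1\<close>)
  qed
qed

lemma U1_A1:
  assumes f: "mk h a b \<in> Kc"
  shows "U1 (A1 (mk h a b)) = mk h a b"
proof -
  note F = Kc_facts[OF f]
  have Y: "Y1 (A1 (mk h a b)) k = hadd H (a k) (V1 (b k))" for k
  proof (cases k)
    case 0
    show ?thesis unfolding A1_mk 0 Y1_def al1_def using F
      by (intro ext_eq) (simp_all add: algebra_simps)
  next
    case (Suc j)
    show ?thesis unfolding A1_mk Suc Y1_def al1_def using F
      by (intro ext_eq) (simp_all add: algebra_simps)
  qed
  have h: "W1 (hadd H (V1 h) (W2 (Q (hadd H (a 0) (V1 (b 0)))))) = h"
    using F by (intro ext_eq) (simp_all add: algebra_simps)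
  have ak: "P1 (hadd H (a k) (V1 (b k))) = a k" for k
    using F by (intro ext_eq) (simp_all add: algebra_simps)
  have bk: "W1 (hadd H (a k) (V1 (b k))) = b k" for k
    using F by (intro ext_eq) (simp_all add: algebra_simps)
  show ?thesis
    unfolding U1_def Y using h ak bk by (simp add: A1_mk)
qed

end

context dil
begin

lemma inner_bV2b:
  assumes "b \<in> C" "b' \<in> C" "W2 b = hzero H" "W2 b' = hzero H" "al \<in> C" "al' \<in> C"
  shows "hinner H (hadd H b (V2 al)) (hadd H b' (V2 al')) = hinner H b b' + hinner H al al'"
  using assms by (simp add: adjW2 adjV2l algebra_simps)

definition be2 :: "(nat \<Rightarrow> 'a) \<Rightarrow> nat \<Rightarrow> 'a" where
  "be2 f k = (if k = 0 then P2 (f 0) else hscale H (q ^ (k - 1)) (P2 (Q (XX f (k - 1)))))"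
definition U2 :: "(nat \<Rightarrow> 'a) \<Rightarrow> nat \<Rightarrow> 'a" where
  "U2 f = mk (W2 (f 0)) (\<lambda>k. hscale H (q ^ k) (W2 (Q (XX f k)))) (be2 f)"
definition Z2 :: "(nat \<Rightarrow> 'a) \<Rightarrow> nat \<Rightarrow> 'a" where
  "Z2 g k = hscale H (cnj q ^ k) (Qs (hadd H (sb g (k + 1)) (V2 (sa g k))))"
definition B2 :: "(nat \<Rightarrow> 'a) \<Rightarrow> nat \<Rightarrow> 'a" where
  "B2 g = mk (hadd H (V2 (g 0)) (sb g 0)) (\<lambda>k. P1 (Z2 g k)) (\<lambda>k. W1 (Z2 g k))"

lemma mk_cong:
  assumes "h = h'" "\<And>k. a k = a' k" "\<And>k. b k = b' k"
  shows "mk h a b = mk h' a' b'"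
proof -
  have "a = a'" by (rule ext) (rule assms(2))
  moreover have "b = b'" by (rule ext) (rule assms(3))
  ultimately show ?thesis using assms(1) by simp
qed

lemma XX_mk: "XX (mk h a b) k = hadd H (a k) (V1 (b k))" by (simp add: XX_def)

lemma be2_mk: "be2 (mk h a b) 0 = P2 h"
  "be2 (mk h a b) (Suc k) = hscale H (q ^ k) (P2 (Q (hadd H (a k) (V1 (b k)))))"
  by (simp_all add: be2_def XX_def)

lemma U2_mk: "U2 (mk h a b) = mk (W2 h) (\<lambda>k. hscale H (q ^ k) (W2 (Q (hadd H (a k) (V1 (b k)))))) (be2 (mk h a b))"
  by (simp add: U2_def XX_def)

lemma be2_in: "mk h a b \<in> Kc \<Longrightarrow> be2 (mk h a b) k \<in> C"
  using Kc_facts[of h a b] by (cases k) (simp_all add: be2_mk)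

lemma bounds_WQ:
  assumes x: "x \<in> C"
  shows "(hnorm H (W2 (Q x)))^2 \<le> (hnorm H x)^2" "(hnorm H (P2 (Q x)))^2 \<le> (hnorm H x)^2"
proof -
  have "(hnorm H (W2 (Q x)))^2 \<le> (hnorm H (Q x))^2 \<and> (hnorm H (P2 (Q x)))^2 \<le> (hnorm H (Q x))^2"
    using norm_sq_le_of_inner[of "Q x" "P2 (Q x)" "W2 (Q x)"] PW2 x by auto
  moreover have "(hnorm H (Q x))^2 = (hnorm H x)^2" using norm_sq x by simp
  ultimately show "(hnorm H (W2 (Q x)))^2 \<le> (hnorm H x)^2" "(hnorm H (P2 (Q x)))^2 \<le> (hnorm H x)^2"
    by simp_all
qed

lemma U2_in:
  assumes f: "mk h a b \<in> Kc"
  shows "U2 (mk h a b) \<in> Kc"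
proof -
  note F = Kc_facts[OF f]
  let ?x = "\<lambda>k. hadd H (a k) (V1 (b k))"
  have xin: "?x k \<in> C" for k using F by simp
  have sx: "summable (\<lambda>k. (hnorm H (?x k))^2)" unfolding norm_XX[OF f] using F by (intro summable_add)
  have sbe: "summable (\<lambda>k. (hnorm H (be2 (mk h a b) k))^2)"
  proof -
    have "summable (\<lambda>k. (hnorm H (be2 (mk h a b) (Suc k)))^2)"
      by (rule summable_comparison_test'[OF sx, of 0]) (use bounds_WQ xin in \<open>simp add: be2_mk norm_scale norm_power q1\<close>)
    then show ?thesis by (rule summable_Suc_iff[THEN iffD1])
  qed
  show ?thesis
    unfolding U2_mk mk_in_Kc
  proof (intro conjI allI)
    show "W2 h \<in> C" using F by simp
    show "hscale H (q ^ k) (W2 (Q (?x k))) \<in> C" for k using F by simp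
    show "W1 (hscale H (q ^ k) (W2 (Q (?x k)))) = hzero H" for k using F by simp
    show "be2 (mk h a b) k \<in> C" for k by (rule be2_in[OF f])
    show "W2 (be2 (mk h a b) k) = hzero H" for k using F by (cases k) (simp_all add: be2_mk)
    show "summable (\<lambda>k. (hnorm H (hscale H (q ^ k) (W2 (Q (?x k)))))^2)"
      by (rule summable_comparison_test'[OF sx, of 0]) (use bounds_WQ xin in \<open>simp add: norm_scale norm_power q1\<close>)
    show "summable (\<lambda>k. (hnorm H (be2 (mk h a b) k))^2)" by (rule sbe)
  qed
qed

lemma U2_inner:
  assumes f: "mk h a b \<in> Kc" and g: "mk h' a' b' \<in> Kc"
  shows "hinner K (U2 (mk h a b)) (U2 (mk h' a' b')) = hinner K (mk h a b) (mk h' a' b')"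
proof -
  note F = Kc_facts[OF f] and G = Kc_facts[OF g]
  let ?x = "\<lambda>k. hadd H (a k) (V1 (b k))" and ?x' = "\<lambda>k. hadd H (a' k) (V1 (b' k))"
  let ?be = "be2 (mk h a b)" and ?be' = "be2 (mk h' a' b')"
  have uf: "mk (W2 h) (\<lambda>k. hscale H (q ^ k) (W2 (Q (?x k)))) ?be \<in> Kc" using U2_in[OF f] unfolding U2_mk .
  have ug: "mk (W2 h') (\<lambda>k. hscale H (q ^ k) (W2 (Q (?x' k)))) ?be' \<in> Kc" using U2_in[OF g] unfolding U2_mk .
  note UF = Kc_facts[OF uf] and UG = Kc_facts[OF ug]
  have xin: "?x k \<in> C" "?x' k \<in> C" for k using F G by simp_all
  have sx: "summable (\<lambda>k. (hnorm H (?x k))^2)" "summable (\<lambda>k. (hnorm H (?x' k))^2)"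
    unfolding norm_XX[OF f] norm_XX[OF g] using F G by (auto intro!: summable_add)
  have s1: "summable (\<lambda>k. hinner H (hscale H (q ^ k) (W2 (Q (?x k)))) (hscale H (q ^ k) (W2 (Q (?x' k)))))"
    by (rule seq_summable_inner) (use UF UG in auto)
  have sbe: "summable (\<lambda>k. hinner H (?be k) (?be' k))"
    by (rule seq_summable_inner) (use UF UG in auto)
  have sW: "summable (\<lambda>k. hinner H (W2 (Q (?x k))) (W2 (Q (?x' k))))"
    using s1 by (simp add: mult.assoc[symmetric] xin)
  have sP: "summable (\<lambda>k. hinner H (P2 (Q (?x k))) (P2 (Q (?x' k))))"
  proof (rule seq_summable_inner)
    show "summable (\<lambda>k. (hnorm H (P2 (Q (?x k))))^2)"
      by (rule summable_comparison_test'[OF sx(1), of 0]) (use bounds_WQ xin in simp)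
    show "summable (\<lambda>k. (hnorm H (P2 (Q (?x' k))))^2)"
      by (rule summable_comparison_test'[OF sx(2), of 0]) (use bounds_WQ xin in simp)
  qed (use xin in auto)
  have sa: "summable (\<lambda>k. hinner H (a k) (a' k))" by (rule seq_summable_inner) (use F G in auto)
  have sb: "summable (\<lambda>k. hinner H (b k) (b' k))" by (rule seq_summable_inner) (use F G in auto)
  have e1: "hinner K (U2 (mk h a b)) (U2 (mk h' a' b'))
      = hinner H (W2 h) (W2 h') + (\<Sum>k. hinner H (hscale H (q ^ k) (W2 (Q (?x k)))) (hscale H (q ^ k) (W2 (Q (?x' k)))))
        + (\<Sum>k. hinner H (?be k) (?be' k))"
    unfolding U2_mk by (rule K_inner[OF uf ug])
  have e2: "(\<Sum>k. hinner H (hscale H (q ^ k) (W2 (Q (?x k)))) (hscale H (q ^ k) (W2 (Q (?x' k)))))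
      = (\<Sum>k. hinner H (W2 (Q (?x k))) (W2 (Q (?x' k))))"
    using xin by (simp add: mult.assoc[symmetric])
  have e3: "(\<Sum>k. hinner H (?be k) (?be' k)) = hinner H (P2 h) (P2 h') + (\<Sum>k. hinner H (P2 (Q (?x k))) (P2 (Q (?x' k))))"
  proof -
    have "(\<Sum>k. hinner H (?be (Suc k)) (?be' (Suc k))) = (\<Sum>k. hinner H (?be k) (?be' k)) - hinner H (?be 0) (?be' 0)"
      by (rule suminf_split_head[OF sbe])
    moreover have "(\<lambda>k. hinner H (?be (Suc k)) (?be' (Suc k))) = (\<lambda>k. hinner H (P2 (Q (?x k))) (P2 (Q (?x' k))))"
      using xin by (simp add: be2_mk algebra_simps)
    ultimately show ?thesis by (simp add: be2_mk)
  qed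
  have e4: "(\<Sum>k. hinner H (W2 (Q (?x k))) (W2 (Q (?x' k)))) + (\<Sum>k. hinner H (P2 (Q (?x k))) (P2 (Q (?x' k))))
      = (\<Sum>k. hinner H (a k) (a' k)) + (\<Sum>k. hinner H (b k) (b' k))"
  proof -
    have "(\<Sum>k. hinner H (W2 (Q (?x k))) (W2 (Q (?x' k)))) + (\<Sum>k. hinner H (P2 (Q (?x k))) (P2 (Q (?x' k))))
        = (\<Sum>k. hinner H (W2 (Q (?x k))) (W2 (Q (?x' k))) + hinner H (P2 (Q (?x k))) (P2 (Q (?x' k))))"
      using suminf_add[OF sW sP] .
    also have "(\<lambda>k. hinner H (W2 (Q (?x k))) (W2 (Q (?x' k))) + hinner H (P2 (Q (?x k))) (P2 (Q (?x' k))))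
        = (\<lambda>k. hinner H (a k) (a' k) + hinner H (b k) (b' k))"
    proof
      fix k
      have "hinner H (P2 (Q (?x k))) (P2 (Q (?x' k))) + hinner H (W2 (Q (?x k))) (W2 (Q (?x' k))) = hinner H (Q (?x k)) (Q (?x' k))"
        by (rule PW2) (use xin in simp_all)
      also have "\<dots> = hinner H (?x k) (?x' k)" using xin by simp
      also have "\<dots> = hinner H (a k) (a' k) + hinner H (b k) (b' k)"
        by (rule inner_bV1) (use F G in auto)
      finally show "hinner H (W2 (Q (?x k))) (W2 (Q (?x' k))) + hinner H (P2 (Q (?x k))) (P2 (Q (?x' k)))
        = hinner H (a k) (a' k) + hinner H (b k) (b' k)" by (simp add: add.commute)
    qed
    also have "(\<Sum>k. hinner H (a k) (a' k) + hinner H (b k) (b' k)) = (\<Sum>k. hinner H (a k) (a' k)) + (\<Sum>k. hinner H (b k) (b' k))"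
      using suminf_add[OF sa sb] by simp
    finally show ?thesis .
  qed
  have e5: "hinner H (W2 h) (W2 h') + hinner H (P2 h) (P2 h') = hinner H h h'"
    using PW2[OF F(1) G(1)] by (simp only: add.commute)
  have "hinner K (mk h a b) (mk h' a' b') = hinner H h h' + (\<Sum>k. hinner H (a k) (a' k)) + (\<Sum>k. hinner H (b k) (b' k))"
    by (rule K_inner[OF f g])
  then show ?thesis using e1 e2 e3 e4 e5 by (simp add: algebra_simps)
qed

lemma U2_add:
  assumes f: "mk h a b \<in> Kc" and g: "mk h' a' b' \<in> Kc"
  shows "U2 (hadd K (mk h a b) (mk h' a' b')) = hadd K (U2 (mk h a b)) (U2 (mk h' a' b'))"
proof -
  note FF = Kc_facts[OF f] Kc_facts[OF g]
  show ?thesis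
    unfolding K_simps mk_add U2_mk
    apply (intro mk_cong)
    subgoal by (rule ext_eq) (simp_all add: algebra_simps FF)
    subgoal by (rule ext_eq) (simp_all add: algebra_simps FF)
    subgoal for k by (cases k) (simp_all add: be2_mk ext_eq_iff algebra_simps FF)
    done
qed

lemma U2_scale:
  assumes f: "mk h a b \<in> Kc"
  shows "U2 (hscale K c (mk h a b)) = hscale K c (U2 (mk h a b))"
proof -
  note FF = Kc_facts[OF f]
  show ?thesis
    unfolding K_simps mk_scale U2_mk
    apply (intro mk_cong)
    subgoal by (rule ext_eq) (simp_all add: algebra_simps FF)
    subgoal by (rule ext_eq) (simp_all add: algebra_simps FF)
    subgoal for k by (cases k) (simp_all add: be2_mk ext_eq_iff algebra_simps FF)
    done
qed

lemma B2_mk: "B2 (mk h a b) = mk (hadd H (V2 h) (b 0))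
   (\<lambda>k. P1 (hscale H (cnj q ^ k) (Qs (hadd H (b (k + 1)) (V2 (a k))))))
   (\<lambda>k. W1 (hscale H (cnj q ^ k) (Qs (hadd H (b (k + 1)) (V2 (a k))))))"
  by (simp add: B2_def Z2_def)

lemma B2_in:
  assumes f: "mk h a b \<in> Kc"
  shows "B2 (mk h a b) \<in> Kc"
proof -
  note F = Kc_facts[OF f]
  let ?z = "\<lambda>k. hscale H (cnj q ^ k) (Qs (hadd H (b (k + 1)) (V2 (a k))))"
  have zin: "?z k \<in> C" for k using F by simp
  have nz: "(hnorm H (?z k))^2 = (hnorm H (b (k+1)))^2 + (hnorm H (a k))^2" for k
  proof (rule norm_sq_eq_of_inner)
    show "hinner H (?z k) (?z k) = hinner H (b (k+1)) (b (k+1)) + hinner H (a k) (a k)"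
      using F by (simp add: mult.assoc[symmetric] adjW2 adjV2l algebra_simps)
  qed (use F in simp_all)
  have sz: "summable (\<lambda>k. (hnorm H (?z k))^2)"
    unfolding nz using F summable_Suc_iff[THEN iffD2, of "\<lambda>k. (hnorm H (b k))^2"] by (intro summable_add) simp_all
  have bP: "(hnorm H (P1 (?z k)))^2 \<le> (hnorm H (?z k))^2" and bW: "(hnorm H (W1 (?z k)))^2 \<le> (hnorm H (?z k))^2" for k
    using norm_sq_le_of_inner[OF zin, of "P1 (?z k)" "W1 (?z k)"] PW1 zin by auto
  show ?thesis
    unfolding B2_mk mk_in_Kc
  proof (intro conjI allI)
    show "hadd H (V2 h) (b 0) \<in> C" using F by simp
    show "P1 (?z k) \<in> C" for k using zin by simp
    show "W1 (P1 (?z k)) = hzero H" for k using zin by simp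
    show "W1 (?z k) \<in> C" for k using zin by simp
    show "W2 (W1 (?z k)) = hzero H" for k using F by simp
    show "summable (\<lambda>k. (hnorm H (P1 (?z k)))^2)"
      by (rule summable_comparison_test'[OF sz, of 0]) (use bP in simp)
    show "summable (\<lambda>k. (hnorm H (W1 (?z k)))^2)"
      by (rule summable_comparison_test'[OF sz, of 0]) (use bW in simp)
  qed
qed

lemma U2_B2:
  assumes f: "mk h a b \<in> Kc"
  shows "U2 (B2 (mk h a b)) = mk h a b"
proof -
  note FF = Kc_facts[OF f]
  show ?thesis
    unfolding B2_mk U2_mk
    apply (intro mk_cong)
    subgoal by (rule ext_eq) (simp_all add: algebra_simps FF)
    subgoal by (rule ext_eq) (simp_all add: algebra_simps FF)
    subgoal for k by (cases k) (simp_all add: be2_mk ext_eq_iff algebra_simps FF)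
    done
qed

end

context hs
begin

lemma unitary_from_iso:
  assumes Uin: "\<And>x. x \<in> hcarrier V \<Longrightarrow> U x \<in> hcarrier V"
    and Uadd: "\<And>x y. x \<in> hcarrier V \<Longrightarrow> y \<in> hcarrier V \<Longrightarrow> U (hadd V x y) = hadd V (U x) (U y)"
    and Uscl: "\<And>a x. x \<in> hcarrier V \<Longrightarrow> U (hscale V a x) = hscale V a (U x)"
    and Uinner: "\<And>x y. x \<in> hcarrier V \<Longrightarrow> y \<in> hcarrier V \<Longrightarrow> hinner V (U x) (U y) = hinner V x y"
    and Sin: "\<And>y. y \<in> hcarrier V \<Longrightarrow> S y \<in> hcarrier V"
    and US: "\<And>y. y \<in> hcarrier V \<Longrightarrow> U (S y) = y"
  shows "unitary_op V U"
proof -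
  have Schar: "hinner V z (S y) = hinner V (U z) y" if "z \<in> hcarrier V" "y \<in> hcarrier V" for z y
    using Uinner[OF that(1) Sin[OF that(2)]] US[OF that(2)] by simp
  have Ub: "bounded_op V U"
    unfolding bounded_op_def
  proof (intro conjI ballI allI exI[of _ 1])
    show "U x \<in> hcarrier V" if "x \<in> hcarrier V" for x using Uin that .
    show "U (hadd V x y) = hadd V (U x) (U y)" if "x \<in> hcarrier V" "y \<in> hcarrier V" for x y using Uadd that .
    show "U (hscale V a x) = hscale V a (U x)" if "x \<in> hcarrier V" for a x using Uscl that .
    show "hnorm V (U x) \<le> 1 * hnorm V x" if "x \<in> hcarrier V" for x
      using Uinner[OF that that] unfolding hnorm_def by simp
  qed
  have Sb: "bounded_op V S"
    unfolding bounded_op_def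
  proof (intro conjI ballI allI exI[of _ 1])
    show "S x \<in> hcarrier V" if "x \<in> hcarrier V" for x using Sin that .
    show "S (hadd V x y) = hadd V (S x) (S y)" if "x \<in> hcarrier V" "y \<in> hcarrier V" for x y
      using that Sin Uin by (intro ext_eq) (simp_all add: Schar)
    show "S (hscale V a x) = hscale V a (S x)" if "x \<in> hcarrier V" for a x
      using that Sin Uin by (intro ext_eq) (simp_all add: Schar)
    show "hnorm V (S x) \<le> 1 * hnorm V x" if "x \<in> hcarrier V" for x
      using Uinner[OF Sin[OF that] Sin[OF that]] US[OF that] unfolding hnorm_def by simp
  qed
  have adjS: "is_adjoint V U S"
    unfolding is_adjoint_def using Sb Schar by (simp add: Schar)
  have hadj: "hadjoint V U y = S y" if y: "y \<in> hcarrier V" for y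
  proof -
    have ex: "\<exists>T. is_adjoint V U T" using adjS by blast
    have T: "is_adjoint V U (hadjoint V U)" unfolding hadjoint_def using someI_ex[OF ex] .
    then have Tb: "bounded_op V (hadjoint V U)" and Tc: "\<And>x y. x \<in> hcarrier V \<Longrightarrow> y \<in> hcarrier V \<Longrightarrow> hinner V (U x) y = hinner V x (hadjoint V U y)"
      unfolding is_adjoint_def by auto
    have "hadjoint V U y \<in> hcarrier V" using bounded_opD(1)[OF Tb y] .
    then show ?thesis using y Sin
      by (intro ext_eq) (simp_all add: Schar Tc[symmetric])
  qed
  show ?thesis
    unfolding unitary_op_def
  proof (intro conjI ballI Ub)
    fix x assume x: "x \<in> hcarrier V"
    show "U (hadjoint V U x) = x" using hadj[OF x] US[OF x] by simp
    show "hadjoint V U (U x) = x" using hadj[OF Uin[OF x]] Sin Uin x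
      by (simp, intro ext_eq) (simp_all add: Schar Uinner)
  qed
qed

end

context dil
begin

declare rel' [simp del]

definition Qbar :: "(nat \<Rightarrow> 'a) \<Rightarrow> nat \<Rightarrow> 'a" where
  "Qbar f = mk (Q (f 0)) (\<lambda>k. hscale H q (sa f k)) (\<lambda>k. hscale H q (sb f k))"
definition Qbinv :: "(nat \<Rightarrow> 'a) \<Rightarrow> nat \<Rightarrow> 'a" where
  "Qbinv f = mk (Qs (f 0)) (\<lambda>k. hscale H (cnj q) (sa f k)) (\<lambda>k. hscale H (cnj q) (sb f k))"
definition J :: "'a \<Rightarrow> nat \<Rightarrow> 'a" where
  "J h = mk h (\<lambda>k. hzero H) (\<lambda>k. hzero H)"

lemma Qbar_mk: "Qbar (mk h a b) = mk (Q h) (\<lambda>k. hscale H q (a k)) (\<lambda>k. hscale H q (b k))"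
  by (simp add: Qbar_def)
lemma Qbinv_mk: "Qbinv (mk h a b) = mk (Qs h) (\<lambda>k. hscale H (cnj q) (a k)) (\<lambda>k. hscale H (cnj q) (b k))"
  by (simp add: Qbinv_def)

lemma Qbar_in: "mk h a b \<in> Kc \<Longrightarrow> Qbar (mk h a b) \<in> Kc"
  unfolding Qbar_mk mk_in_Kc using q1 by (simp add: norm_scale)
lemma Qbinv_in: "mk h a b \<in> Kc \<Longrightarrow> Qbinv (mk h a b) \<in> Kc"
  unfolding Qbinv_mk mk_in_Kc using q1 by (simp add: norm_scale)

lemma Qbar_inner:
  assumes f: "mk h a b \<in> Kc" and g: "mk h' a' b' \<in> Kc"
  shows "hinner K (Qbar (mk h a b)) (Qbar (mk h' a' b')) = hinner K (mk h a b) (mk h' a' b')"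
proof -
  note F = Kc_facts[OF f] and G = Kc_facts[OF g]
  have "hinner K (Qbar (mk h a b)) (Qbar (mk h' a' b')) = hinner H (Q h) (Q h') + (\<Sum>k. hinner H (hscale H q (a k)) (hscale H q (a' k)))
      + (\<Sum>k. hinner H (hscale H q (b k)) (hscale H q (b' k)))"
    unfolding Qbar_mk by (rule K_inner) (use Qbar_in[OF f] Qbar_in[OF g] in \<open>simp_all add: Qbar_mk\<close>)
  also have "\<dots> = hinner H h h' + (\<Sum>k. hinner H (a k) (a' k)) + (\<Sum>k. hinner H (b k) (b' k))"
    using F G by (simp add: mult.assoc[symmetric])
  also have "\<dots> = hinner K (mk h a b) (mk h' a' b')" by (rule K_inner[OF f g, symmetric])
  finally show ?thesis .
qed

lemma Qbar_Qbinv: "mk h a b \<in> Kc \<Longrightarrow> Qbar (Qbinv (mk h a b)) = mk h a b"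
  unfolding Qbinv_mk Qbar_mk using Kc_facts[of h a b] by (simp add: mk_eq_iff fun_eq_iff)

lemma Qbar_add: "mk h a b \<in> Kc \<Longrightarrow> mk h' a' b' \<in> Kc \<Longrightarrow> Qbar (hadd K (mk h a b) (mk h' a' b')) = hadd K (Qbar (mk h a b)) (Qbar (mk h' a' b'))"
  unfolding K_simps mk_add Qbar_mk using Kc_facts[of h a b] Kc_facts[of h' a' b']
  by (intro mk_cong) (simp_all add: ax(11))
lemma Qbar_scale: "mk h a b \<in> Kc \<Longrightarrow> Qbar (hscale K c (mk h a b)) = hscale K c (Qbar (mk h a b))"
  unfolding K_simps mk_scale Qbar_mk using Kc_facts[of h a b]
  by (intro mk_cong) (simp_all add: mult.commute)

lemma PV1 [simp]: "y \<in> C \<Longrightarrow> hadd H (P1 y) (V1 (W1 y)) = y"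
  by (intro ext_eq) simp_all
lemma PV2 [simp]: "y \<in> C \<Longrightarrow> hadd H (P2 y) (V2 (W2 y)) = y"
  by (intro ext_eq) simp_all
lemma P1_aV1 [simp]: "a \<in> C \<Longrightarrow> W1 a = hzero H \<Longrightarrow> b \<in> C \<Longrightarrow> P1 (hadd H a (V1 b)) = a"
  by (intro ext_eq) simp_all
lemma P2_bV2 [simp]: "b \<in> C \<Longrightarrow> W2 b = hzero H \<Longrightarrow> a \<in> C \<Longrightarrow> P2 (hadd H b (V2 a)) = b"
  by (intro ext_eq) simp_all

lemma G1: "y \<in> C \<Longrightarrow> hadd H (P2 y) (V2 (P1 (W2 y))) = hdiff H y (V2 (V1 (W1 (W2 y))))"
  by (intro ext_eq) (simp_all del: relV)
lemma G2: "h \<in> C \<Longrightarrow> hadd H (P1 h) (V1 (P2 (W1 h))) = hdiff H h (V1 (V2 (W2 (W1 h))))"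
  by (intro ext_eq) (simp_all del: R1 R2)

lemma S0: "h \<in> C \<Longrightarrow> Qs (hadd H (P2 (Q h)) (V2 (P1 (W2 (Q h))))) = hadd H (P1 h) (V1 (P2 (W1 h)))"
proof -
  assume h: "h \<in> C"
  have "Qs (hadd H (P2 (Q h)) (V2 (P1 (W2 (Q h))))) = Qs (hdiff H (Q h) (V2 (V1 (W1 (W2 (Q h))))))"
    using G1[of "Q h"] h by simp
  also have "V2 (V1 (W1 (W2 (Q h)))) = Q (V1 (V2 (W2 (W1 h))))" using h by simp
  also have "Qs (hdiff H (Q h) (Q (V1 (V2 (W2 (W1 h)))))) = hdiff H h (V1 (V2 (W2 (W1 h))))"
    using h by simp
  also have "\<dots> = hadd H (P1 h) (V1 (P2 (W1 h)))" using G2[OF h] by simp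
  finally show ?thesis .
qed

lemma R3 [simp]: "x \<in> C \<Longrightarrow> W2 (Q (V1 (V2 x))) = V1 x"
proof -
  assume x: "x \<in> C"
  have "Q (V1 (V2 x)) = V2 (V1 x)" using relV[OF x] by simp
  then show ?thesis using x by (simp del: relV)
qed

lemma relation:
  assumes f: "mk h a b \<in> Kc"
  shows "U2 (U1 (mk h a b)) = U1 (U2 (Qbar (mk h a b)))"
proof -
  note FF = Kc_facts[OF f]
  show ?thesis
    unfolding U1_def U2_def Qbar_mk Y1_def al1_def be2_def XX_def
    apply (simp only: mk_0 sa_mk sb_mk)
    apply (intro mk_cong)
    subgoal by (rule ext_eq) (simp_all add: FF algebra_simps)
    subgoal for k by (cases k) (simp_all add: S0 FF ext_eq_iff algebra_simps)
    subgoal for k by (cases k) (simp_all add: S0 FF ext_eq_iff algebra_simps)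
    done
qed

lemma Kc_eta: "f \<in> Kc \<Longrightarrow> mk (f 0) (sa f) (sb f) \<in> Kc" using mk_eta[of f] by simp

lemma Khs: "hs K" by (rule hs.intro[OF K_hilbert])

lemma U1_in': "f \<in> Kc \<Longrightarrow> U1 f \<in> Kc" using U1_in[OF Kc_eta] mk_eta[of f] by metis
lemma U2_in': "f \<in> Kc \<Longrightarrow> U2 f \<in> Kc" using U2_in[OF Kc_eta] mk_eta[of f] by metis
lemma Qbar_in': "f \<in> Kc \<Longrightarrow> Qbar f \<in> Kc" using Qbar_in[OF Kc_eta] mk_eta[of f] by metis

lemma U1_unitary: "unitary_op K U1"
proof (rule hs.unitary_from_iso[OF Khs, where S = A1], unfold K_simps)
  show "U1 x \<in> Kc" if "x \<in> Kc" for x using U1_in' that .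
  show "U1 (hadd (l2space H) x y) = hadd (l2space H) (U1 x) (U1 y)" if "x \<in> Kc" "y \<in> Kc" for x y
    using U1_add[OF Kc_eta[OF that(1)] Kc_eta[OF that(2)]] mk_eta[of x] mk_eta[of y] by simp
  show "U1 (hscale (l2space H) a x) = hscale (l2space H) a (U1 x)" if "x \<in> Kc" for a x
    using U1_scale[OF Kc_eta[OF that]] mk_eta[of x] by simp
  show "hinner (l2space H) (U1 x) (U1 y) = hinner (l2space H) x y" if "x \<in> Kc" "y \<in> Kc" for x y
    using U1_inner[OF Kc_eta[OF that(1)] Kc_eta[OF that(2)]] mk_eta[of x] mk_eta[of y] by simp
  show "A1 y \<in> Kc" if "y \<in> Kc" for y using A1_in[OF Kc_eta[OF that]] mk_eta[of y] by metis
  show "U1 (A1 y) = y" if "y \<in> Kc" for y using U1_A1[OF Kc_eta[OF that]] mk_eta[of y] by metis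
qed

lemma U2_unitary: "unitary_op K U2"
proof (rule hs.unitary_from_iso[OF Khs, where S = B2], unfold K_simps)
  show "U2 x \<in> Kc" if "x \<in> Kc" for x using U2_in' that .
  show "U2 (hadd (l2space H) x y) = hadd (l2space H) (U2 x) (U2 y)" if "x \<in> Kc" "y \<in> Kc" for x y
    using U2_add[OF Kc_eta[OF that(1)] Kc_eta[OF that(2)]] mk_eta[of x] mk_eta[of y] by simp
  show "U2 (hscale (l2space H) a x) = hscale (l2space H) a (U2 x)" if "x \<in> Kc" for a x
    using U2_scale[OF Kc_eta[OF that]] mk_eta[of x] by simp
  show "hinner (l2space H) (U2 x) (U2 y) = hinner (l2space H) x y" if "x \<in> Kc" "y \<in> Kc" for x y
    using U2_inner[OF Kc_eta[OF that(1)] Kc_eta[OF that(2)]] mk_eta[of x] mk_eta[of y] by simp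
  show "B2 y \<in> Kc" if "y \<in> Kc" for y using B2_in[OF Kc_eta[OF that]] mk_eta[of y] by metis
  show "U2 (B2 y) = y" if "y \<in> Kc" for y using U2_B2[OF Kc_eta[OF that]] mk_eta[of y] by metis
qed

lemma Qbar_unitary: "unitary_op K Qbar"
proof (rule hs.unitary_from_iso[OF Khs, where S = Qbinv], unfold K_simps)
  show "Qbar x \<in> Kc" if "x \<in> Kc" for x using Qbar_in' that .
  show "Qbar (hadd (l2space H) x y) = hadd (l2space H) (Qbar x) (Qbar y)" if "x \<in> Kc" "y \<in> Kc" for x y
    using Qbar_add[OF Kc_eta[OF that(1)] Kc_eta[OF that(2)]] mk_eta[of x] mk_eta[of y] by simp
  show "Qbar (hscale (l2space H) a x) = hscale (l2space H) a (Qbar x)" if "x \<in> Kc" for a x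
    using Qbar_scale[OF Kc_eta[OF that]] mk_eta[of x] by simp
  show "hinner (l2space H) (Qbar x) (Qbar y) = hinner (l2space H) x y" if "x \<in> Kc" "y \<in> Kc" for x y
    using Qbar_inner[OF Kc_eta[OF that(1)] Kc_eta[OF that(2)]] mk_eta[of x] mk_eta[of y] by simp
  show "Qbinv y \<in> Kc" if "y \<in> Kc" for y using Qbinv_in[OF Kc_eta[OF that]] mk_eta[of y] by metis
  show "Qbar (Qbinv y) = y" if "y \<in> Kc" for y using Qbar_Qbinv[OF Kc_eta[OF that]] mk_eta[of y] by metis
qed

lemma relation': "f \<in> Kc \<Longrightarrow> U2 (U1 f) = U1 (U2 (Qbar f))"
  using relation[OF Kc_eta] mk_eta[of f] by metis

lemma J_in: "h \<in> C \<Longrightarrow> J h \<in> Kc"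
  unfolding J_def mk_in_Kc by simp

lemma inner_J:
  assumes k: "k \<in> Kc" and s: "s \<in> C"
  shows "hinner K (J s) k = hinner H s (k 0)"
proof -
  have "hinner K (J s) (mk (k 0) (sa k) (sb k)) = hinner H s (k 0) + (\<Sum>n. hinner H (hzero H) (sa k n)) + (\<Sum>n. hinner H (hzero H) (sb k n))"
    unfolding J_def by (rule K_inner) (use J_in[OF s] Kc_eta[OF k] in \<open>simp_all add: J_def\<close>)
  also have "\<dots> = hinner H s (k 0)" using Kc_facts[OF Kc_eta[OF k]] by simp
  finally show ?thesis using mk_eta[of k] by simp
qed

lemma orth_iff:
  assumes k: "k \<in> Kc"
  shows "orth_to K (J ` C) k \<longleftrightarrow> k 0 = hzero H"
proof -
  have k0: "k 0 \<in> C" using Kc_facts[OF Kc_eta[OF k]] by simp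
  have "orth_to K (J ` C) k \<longleftrightarrow> (\<forall>s\<in>C. hinner H s (k 0) = 0)"
    unfolding orth_to_def using inner_J[OF k] by auto
  also have "\<dots> \<longleftrightarrow> k 0 = hzero H"
  proof
    assume "\<forall>s\<in>C. hinner H s (k 0) = 0"
    then have "hinner H (k 0) (k 0) = 0" using k0 by blast
    then show "k 0 = hzero H" using ax(16) k0 by blast
  qed simp
  finally show ?thesis .
qed

lemma U1_0 [simp]: "U1 f 0 = W1 (f 0)" by (simp add: U1_def)
lemma U2_0 [simp]: "U2 f 0 = W2 (f 0)" by (simp add: U2_def)

lemma pow_U1_0: "(U1 ^^ n) f 0 = (W1 ^^ n) (f 0)" by (induction n) simp_all
lemma pow_U2_0: "(U2 ^^ n) f 0 = (W2 ^^ n) (f 0)" by (induction n) simp_all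
lemma pow_U1_in: "f \<in> Kc \<Longrightarrow> (U1 ^^ n) f \<in> Kc" by (induction n) (simp_all add: U1_in')
lemma pow_U2_in: "f \<in> Kc \<Longrightarrow> (U2 ^^ n) f \<in> Kc" by (induction n) (simp_all add: U2_in')

lemma J_0 [simp]: "J h 0 = h" by (simp add: J_def)

lemma main_dil:
  "complex_hilbert_space K \<and> isometric_embedding H K J \<and>
    unitary_op K Qbar \<and> unitary_op K U1 \<and> unitary_op K U2 \<and>
    reduces K (J ` hcarrier H) Qbar \<and>
    (\<forall>h\<in>hcarrier H. Qbar (J h) = J (Q h)) \<and>
    (\<forall>k\<in>hcarrier K. orth_to K (J ` hcarrier H) k \<longrightarrow> Qbar k = hscale K q k) \<and>
    (\<forall>k\<in>hcarrier K. U2 (U1 k) = U1 (U2 (Qbar k))) \<and>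
    lifting H K J U1 W1 \<and> lifting H K J U2 W2 \<and>
    (\<forall>n m. compression H K J ((U1 ^^ n) \<circ> (U2 ^^ m)) ((W1 ^^ n) \<circ> (W2 ^^ m)) \<and>
           compression H K J ((U2 ^^ n) \<circ> (U1 ^^ m)) ((W2 ^^ n) \<circ> (W1 ^^ m)))"
proof (intro conjI)
  show "complex_hilbert_space K" by (rule K_hilbert)
  show "isometric_embedding H K J"
    unfolding isometric_embedding_def K_simps
  proof (intro conjI ballI allI)
    show "J h \<in> Kc" if "h \<in> C" for h using J_in that .
    show "J (hadd H x y) = hadd (l2space H) (J x) (J y)" if "x \<in> C" "y \<in> C" for x y
      unfolding J_def mk_add by simp
    show "J (hscale H a x) = hscale (l2space H) a (J x)" if "x \<in> C" for a x
      unfolding J_def mk_scale by simp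
    show "hinner (l2space H) (J x) (J y) = hinner H x y" if "x \<in> C" "y \<in> C" for x y
      using inner_J[OF J_in[OF that(2)] that(1)] by simp
  qed
  show "unitary_op K Qbar" by (rule Qbar_unitary)
  show "unitary_op K U1" by (rule U1_unitary)
  show "unitary_op K U2" by (rule U2_unitary)
  show "reduces K (J ` C) Qbar"
    unfolding reduces_def
  proof (intro conjI ballI impI)
    fix k assume "k \<in> J ` C"
    then obtain h where h: "h \<in> C" "k = J h" by blast
    have "Qbar (J h) = J (Q h)" unfolding J_def Qbar_mk by simp
    then show "Qbar k \<in> J ` C" using h by simp
  next
    fix k assume k: "k \<in> hcarrier K" and o: "orth_to K (J ` C) k"
    then have "k 0 = hzero H" using orth_iff by simp
    then have "Qbar k 0 = hzero H" by (simp add: Qbar_def)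
    then show "orth_to K (J ` C) (Qbar k)" using orth_iff Qbar_in' k by simp
  qed
  show "\<forall>h\<in>C. Qbar (J h) = J (Q h)" unfolding J_def Qbar_mk by simp
  show "\<forall>k\<in>hcarrier K. orth_to K (J ` C) k \<longrightarrow> Qbar k = hscale K q k"
  proof (intro ballI impI)
    fix k assume k: "k \<in> hcarrier K" and o: "orth_to K (J ` C) k"
    then have k0: "k 0 = hzero H" using orth_iff by simp
    have "Qbar k = mk (Q (k 0)) (\<lambda>n. hscale H q (sa k n)) (\<lambda>n. hscale H q (sb k n))" by (simp add: Qbar_def)
    also have "\<dots> = hscale (l2space H) q (mk (k 0) (sa k) (sb k))" unfolding mk_scale k0 by simp
    finally show "Qbar k = hscale K q k" using mk_eta[of k] by simp
  qed
  show "\<forall>k\<in>hcarrier K. U2 (U1 k) = U1 (U2 (Qbar k))" using relation' by simp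
  show "lifting H K J U1 W1"
    unfolding lifting_def compression_def
  proof (intro conjI ballI impI)
    fix k assume k: "k \<in> hcarrier K" and o: "orth_to K (J ` C) k"
    then show "orth_to K (J ` C) (U1 k)" using orth_iff U1_in' by simp
  next
    fix h h' assume "h \<in> C" "h' \<in> C"
    then show "hinner K (J h') (U1 (J h)) = hinner H h' (W1 h)"
      using inner_J[OF U1_in'[OF J_in]] by simp
  qed
  show "lifting H K J U2 W2"
    unfolding lifting_def compression_def
  proof (intro conjI ballI impI)
    fix k assume k: "k \<in> hcarrier K" and o: "orth_to K (J ` C) k"
    then show "orth_to K (J ` C) (U2 k)" using orth_iff U2_in' by simp
  next
    fix h h' assume "h \<in> C" "h' \<in> C"
    then show "hinner K (J h') (U2 (J h)) = hinner H h' (W2 h)"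
      using inner_J[OF U2_in'[OF J_in]] by simp
  qed
  show "\<forall>n m. compression H K J ((U1 ^^ n) \<circ> (U2 ^^ m)) ((W1 ^^ n) \<circ> (W2 ^^ m)) \<and>
           compression H K J ((U2 ^^ n) \<circ> (U1 ^^ m)) ((W2 ^^ n) \<circ> (W1 ^^ m))"
    unfolding compression_def
  proof (intro allI conjI ballI)
    fix n m h h' assume h: "h \<in> C" and h': "h' \<in> C"
    show "hinner K (J h') (((U1 ^^ n) \<circ> (U2 ^^ m)) (J h)) = hinner H h' (((W1 ^^ n) \<circ> (W2 ^^ m)) h)"
      using inner_J[OF pow_U1_in[OF pow_U2_in[OF J_in[OF h]]] h'] by (simp add: pow_U1_0 pow_U2_0)
    show "hinner K (J h') (((U2 ^^ n) \<circ> (U1 ^^ m)) (J h)) = hinner H h' (((W2 ^^ n) \<circ> (W1 ^^ m)) h)"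
      using inner_J[OF pow_U2_in[OF pow_U1_in[OF J_in[OF h]]] h'] by (simp add: pow_U1_0 pow_U2_0)
  qed
qed

end

theorem mainTheorem12:
  fixes H :: "'a chspace" and W1 W2 Q :: "'a \<Rightarrow> 'a" and q :: complex
  assumes "complex_hilbert_space H"
    and "coisometry H W1" and "coisometry H W2" and "unitary_op H Q"
    and "\<forall>h\<in>hcarrier H. W2 (W1 h) = W1 (W2 (Q h))"
    and "cmod q = 1"
  shows "\<exists>(K :: (nat \<Rightarrow> 'a) chspace) J Qb U1 U2.
    complex_hilbert_space K \<and> isometric_embedding H K J \<and>
    unitary_op K Qb \<and> unitary_op K U1 \<and> unitary_op K U2 \<and>
    reduces K (J ` hcarrier H) Qb \<and>
    (\<forall>h\<in>hcarrier H. Qb (J h) = J (Q h)) \<and>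
    (\<forall>k\<in>hcarrier K. orth_to K (J ` hcarrier H) k \<longrightarrow> Qb k = hscale K q k) \<and>
    (\<forall>k\<in>hcarrier K. U2 (U1 k) = U1 (U2 (Qb k))) \<and>
    lifting H K J U1 W1 \<and> lifting H K J U2 W2 \<and>
    (\<forall>n m. compression H K J ((U1 ^^ n) \<circ> (U2 ^^ m)) ((W1 ^^ n) \<circ> (W2 ^^ m)) \<and>
           compression H K J ((U2 ^^ n) \<circ> (U1 ^^ m)) ((W2 ^^ n) \<circ> (W1 ^^ m)))"
proof -
  interpret D: dil H W1 W2 Q q
    using assms unfolding dil_def dil_axioms_def hs_def by blast
  show ?thesis using D.main_dil by blast
qed

end
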